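(* Let $1\le p\le q\le\infty$ and let $E$ be an angelic, complete and barrelled locally convex space (for example, a strict $(LF)$-space). Then the following properties of $E$ are all equivalent: $GP_{(p,q)}$, $EGP_{(p,q)}$, $sGP_{(p,q)}$, $sEGP_{(p,q)}$, $prGP_{(p,q)}$, $prEGP_{(p,q)}$, $spGP_{(p,q)}$, $spEGP_{(p,q)}$ and $b$-$GP_{(p,q)}$.
   Context: All locally convex spaces (lcs) are Hausdorff over $\mathbb F\in\{\mathbb R,\mathbb C\}$. $E'$ is the dual of $E$. For $A\subseteq E$ and $\chi\in E'$, $\|\chi\|_A:=\sup\{|\chi(x)|:x\in A\cup\{0\}\}$. A sequence $(\chi_n)$ in $E'$ is weak$^*$ $p$-summable ($p\in[1,\infty]$) if $(\chi_n(x))_n\in\ell_p$ for every $x\in E$ (in $c_0$ if $p=\infty$). For $1\le p\le q\le\infty$, a nonempty $A\subseteq E$ is $(p,q)$-limited (resp. $(p,q)$-$\mathcal E$-limited) if for every (resp. every equicontinuous) weak$^*$ $p$-summable sequence $(\chi_n)$ in $E'$, $(\|\chi_n\|_A)_n\in\ell_q$ if $q<\infty$ and $\|\chi_n\|_A\to0$ if $q=\infty$. A set is sequentially precompact if each of its sequences has a Cauchy subsequence, and relatively sequentially compact if each of its sequences has a subsequence converging in $E$. $E$ has the $GP_{(p,q)}$ (resp. $prGP_{(p,q)}$, $sGP_{(p,q)}$, $spGP_{(p,q)}$) property if every $(p,q)$-limited subset of $E$ is relatively compact (resp. precompact, relatively sequentially compact, sequentially precompact); the properties $EGP_{(p,q)}$,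 $prEGP_{(p,q)}$, $sEGP_{(p,q)}$, $spEGP_{(p,q)}$ are defined in the same way with "$(p,q)$-limited" replaced by "$(p,q)$-$\mathcal E$-limited". $E$ has the $b$-$GP_{(p,q)}$ property if every $(p,q)$-limited subset of $E$ is precompact in the strong topology $\beta(E,E')$. A Tychonoff space $X$ is angelic if every relatively countably compact subset is relatively compact and every compact subspace is Fréchet–Urysohn. A strict $(LF)$-space is the strict inductive limit of an increasing sequence of Fréchet spaces $E_n$ with $E_{m}$ inducing on $E_n$ its original topology for $n\le m$. *)

theory Defs
  imports "HOL-Analysis.Analysis"
begin

text \<open>A Hausdorff locally convex space over a complete normed field 'k (i.e. R or C)
is modelled as a vector space (carrier: the whole type 'v, scalar action smul)
together with a separating family P of seminorms generating its topology.\<close>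

definition is_seminorm :: "('k::real_normed_field \<Rightarrow> 'v::ab_group_add \<Rightarrow> 'v) \<Rightarrow> ('v \<Rightarrow> real) \<Rightarrow> bool" where
  "is_seminorm smul p \<longleftrightarrow> (\<forall>x y. p (x + y) \<le> p x + p y) \<and> (\<forall>c x. p (smul c x) = norm c * p x)"

definition lcs :: "('k::real_normed_field \<Rightarrow> 'v::ab_group_add \<Rightarrow> 'v) \<Rightarrow> ('v \<Rightarrow> real) set \<Rightarrow> bool" where
  "lcs smul P \<longleftrightarrow> Vector_Spaces.vector_space smul \<and> (\<forall>p\<in>P. is_seminorm smul p)
      \<and> (\<forall>x. x \<noteq> 0 \<longrightarrow> (\<exists>p\<in>P. p x \<noteq> 0))"

definition seminorm_top :: "('v::ab_group_add \<Rightarrow> real) set \<Rightarrow> 'v topology" where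
  "seminorm_top P = topology (\<lambda>U. \<forall>x\<in>U. \<exists>Q \<epsilon>. finite Q \<and> Q \<subseteq> P \<and> \<epsilon> > 0 \<and>
      {y. \<forall>p\<in>Q. p (y - x) < \<epsilon>} \<subseteq> U)"


lemma istopology_seminorm_top:
  fixes P :: "('v::ab_group_add \<Rightarrow> real) set"
  shows "istopology (\<lambda>U. \<forall>x\<in>U. \<exists>Q \<epsilon>. finite Q \<and> Q \<subseteq> P \<and> \<epsilon> > 0 \<and>
      {y. \<forall>p\<in>Q. p (y - x) < \<epsilon>} \<subseteq> U)"
  unfolding istopology_def
proof (intro conjI allI impI)
  fix S T :: "'v set"
  assume S: "\<forall>x\<in>S. \<exists>Q \<epsilon>. finite Q \<and> Q \<subseteq> P \<and> \<epsilon> > 0 \<and> {y. \<forall>p\<in>Q. p (y - x) < \<epsilon>} \<subseteq> S"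
     and T: "\<forall>x\<in>T. \<exists>Q \<epsilon>. finite Q \<and> Q \<subseteq> P \<and> \<epsilon> > 0 \<and> {y. \<forall>p\<in>Q. p (y - x) < \<epsilon>} \<subseteq> T"
  show "\<forall>x\<in>S \<inter> T. \<exists>Q \<epsilon>. finite Q \<and> Q \<subseteq> P \<and> \<epsilon> > 0 \<and> {y. \<forall>p\<in>Q. p (y - x) < \<epsilon>} \<subseteq> S \<inter> T"
  proof
    fix x assume "x \<in> S \<inter> T"
    then obtain Q1 e1 Q2 e2 where 1: "finite Q1" "Q1 \<subseteq> P" "e1 > 0" "{y. \<forall>p\<in>Q1. p (y - x) < e1} \<subseteq> S"
      and 2: "finite Q2" "Q2 \<subseteq> P" "e2 > 0" "{y. \<forall>p\<in>Q2. p (y - x) < e2} \<subseteq> T"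
      using S T by (meson IntD1 IntD2)
    have "{y. \<forall>p\<in>Q1 \<union> Q2. p (y - x) < min e1 e2} \<subseteq> S \<inter> T"
    proof -
      have "{y. \<forall>p\<in>Q1 \<union> Q2. p (y - x) < min e1 e2} \<subseteq> {y. \<forall>p\<in>Q1. p (y - x) < e1}" by auto
      moreover have "{y. \<forall>p\<in>Q1 \<union> Q2. p (y - x) < min e1 e2} \<subseteq> {y. \<forall>p\<in>Q2. p (y - x) < e2}" by auto
      ultimately show ?thesis using 1(4) 2(4) by blast
    qed
    then show "\<exists>Q \<epsilon>. finite Q \<and> Q \<subseteq> P \<and> \<epsilon> > 0 \<and> {y. \<forall>p\<in>Q. p (y - x) < \<epsilon>} \<subseteq> S \<inter> T"
      using 1 2 by (intro exI[of _ "Q1 \<union> Q2"] exI[of _ "min e1 e2"]) simp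
  qed
next
  fix K :: "'v set set"
  assume "\<forall>U\<in>K. \<forall>x\<in>U. \<exists>Q \<epsilon>. finite Q \<and> Q \<subseteq> P \<and> \<epsilon> > 0 \<and> {y. \<forall>p\<in>Q. p (y - x) < \<epsilon>} \<subseteq> U"
  then show "\<forall>x\<in>\<Union>K. \<exists>Q \<epsilon>. finite Q \<and> Q \<subseteq> P \<and> \<epsilon> > 0 \<and> {y. \<forall>p\<in>Q. p (y - x) < \<epsilon>} \<subseteq> \<Union>K"
    by (meson Union_upper order_trans UnionE)
qed

definition dual :: "('k::real_normed_field \<Rightarrow> 'v::ab_group_add \<Rightarrow> 'v) \<Rightarrow> ('v \<Rightarrow> real) set \<Rightarrow> ('v \<Rightarrow> 'k) set" where
  "dual smul P = {\<phi>. Vector_Spaces.linear smul (\<lambda>a b. a * b) \<phi> \<and> continuous_map (seminorm_top P) euclidean \<phi>}"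

text \<open>Membership in l_p for p in [1,\<infinity>]; for p = \<infinity> this means c_0 (as in the paper's conventions).\<close>
definition in_lp :: "ereal \<Rightarrow> (nat \<Rightarrow> real) \<Rightarrow> bool" where
  "in_lp p s \<longleftrightarrow> (if p = \<infinity> then s \<longlonglongrightarrow> 0 else summable (\<lambda>n. \<bar>s n\<bar> powr real_of_ereal p))"

definition weak_star_summable :: "('k::real_normed_field \<Rightarrow> 'v::ab_group_add \<Rightarrow> 'v) \<Rightarrow> ('v \<Rightarrow> real) set \<Rightarrow> ereal \<Rightarrow> (nat \<Rightarrow> 'v \<Rightarrow> 'k) \<Rightarrow> bool" where
  "weak_star_summable smul P p \<phi>s \<longleftrightarrow> (\<forall>n. \<phi>s n \<in> dual smul P) \<and> (\<forall>x. in_lp p (\<lambda>n. norm (\<phi>s n x)))"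

definition norm_on :: "'v::ab_group_add set \<Rightarrow> ('v \<Rightarrow> 'k::real_normed_field) \<Rightarrow> real" where
  "norm_on A \<phi> = Sup ((\<lambda>x. norm (\<phi> x)) ` (A \<union> {0}))"

definition norm_on_finite :: "'v::ab_group_add set \<Rightarrow> ('v \<Rightarrow> 'k::real_normed_field) \<Rightarrow> bool" where
  "norm_on_finite A \<phi> \<longleftrightarrow> bdd_above ((\<lambda>x. norm (\<phi> x)) ` (A \<union> {0}))"

definition equicontinuous :: "'v topology \<Rightarrow> ('v \<Rightarrow> 'k::real_normed_vector) set \<Rightarrow> bool" where
  "equicontinuous T H \<longleftrightarrow> (\<forall>x0\<in>topspace T. \<forall>\<epsilon>>0. \<exists>U. openin T U \<and> x0 \<in> U \<and>
      (\<forall>\<phi>\<in>H. \<forall>x\<in>U. norm (\<phi> x - \<phi> x0) < \<epsilon>))"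

definition pq_limited :: "('k::real_normed_field \<Rightarrow> 'v::ab_group_add \<Rightarrow> 'v) \<Rightarrow> ('v \<Rightarrow> real) set \<Rightarrow> ereal \<Rightarrow> ereal \<Rightarrow> 'v set \<Rightarrow> bool" where
  "pq_limited smul P p q A \<longleftrightarrow> A \<noteq> {} \<and> (\<forall>\<phi>s. weak_star_summable smul P p \<phi>s \<longrightarrow>
      (\<forall>n. norm_on_finite A (\<phi>s n)) \<and> in_lp q (\<lambda>n. norm_on A (\<phi>s n)))"

definition pq_E_limited :: "('k::real_normed_field \<Rightarrow> 'v::ab_group_add \<Rightarrow> 'v) \<Rightarrow> ('v \<Rightarrow> real) set \<Rightarrow> ereal \<Rightarrow> ereal \<Rightarrow> 'v set \<Rightarrow> bool" where
  "pq_E_limited smul P p q A \<longleftrightarrow> A \<noteq> {} \<and> (\<forall>\<phi>s. weak_star_summable smul P p \<phi>s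
      \<and> equicontinuous (seminorm_top P) (range \<phi>s) \<longrightarrow>
      (\<forall>n. norm_on_finite A (\<phi>s n)) \<and> in_lp q (\<lambda>n. norm_on A (\<phi>s n)))"

definition rel_compact :: "'a topology \<Rightarrow> 'a set \<Rightarrow> bool" where
  "rel_compact T A \<longleftrightarrow> compactin T (T closure_of A)"

definition precompact :: "'v::ab_group_add topology \<Rightarrow> 'v set \<Rightarrow> bool" where
  "precompact T A \<longleftrightarrow> (\<forall>U. openin T U \<and> 0 \<in> U \<longrightarrow>
      (\<exists>F. finite F \<and> A \<subseteq> (\<Union>f\<in>F. (\<lambda>u. f + u) ` U)))"

definition rel_seq_compact :: "'a topology \<Rightarrow> 'a set \<Rightarrow> bool" where
  "rel_seq_compact T A \<longleftrightarrow> (\<forall>s::nat \<Rightarrow> _. range s \<subseteq> A \<longrightarrow>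
      (\<exists>r l. strict_mono r \<and> limitin T (s \<circ> r) l sequentially))"

definition cauchy_seq_sn :: "('v::ab_group_add \<Rightarrow> real) set \<Rightarrow> (nat \<Rightarrow> 'v) \<Rightarrow> bool" where
  "cauchy_seq_sn P s \<longleftrightarrow> (\<forall>p\<in>P. \<forall>\<epsilon>>0. \<exists>N. \<forall>m\<ge>N. \<forall>n\<ge>N. p (s m - s n) < \<epsilon>)"

definition seq_precompact :: "('v::ab_group_add \<Rightarrow> real) set \<Rightarrow> 'v set \<Rightarrow> bool" where
  "seq_precompact P A \<longleftrightarrow> (\<forall>s::nat \<Rightarrow> _. range s \<subseteq> A \<longrightarrow> (\<exists>r. strict_mono r \<and> cauchy_seq_sn P (s \<circ> r)))"

text \<open>Strong topology \<beta>(E,E'): uniform convergence on \<sigma>(E',E)-bounded subsets of E'.\<close>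
definition strong_seminorms :: "('k::real_normed_field \<Rightarrow> 'v::ab_group_add \<Rightarrow> 'v) \<Rightarrow> ('v \<Rightarrow> real) set \<Rightarrow> ('v \<Rightarrow> real) set" where
  "strong_seminorms smul P = {(\<lambda>x. Sup (insert 0 ((\<lambda>\<phi>. norm (\<phi> x)) ` B))) | B.
      B \<subseteq> dual smul P \<and> (\<forall>x. bdd_above ((\<lambda>\<phi>. norm (\<phi> x)) ` B))}"

definition strong_top :: "('k::real_normed_field \<Rightarrow> 'v::ab_group_add \<Rightarrow> 'v) \<Rightarrow> ('v \<Rightarrow> real) set \<Rightarrow> 'v topology" where
  "strong_top smul P = seminorm_top (strong_seminorms smul P)"

definition cauchy_filter_sn :: "('v::ab_group_add \<Rightarrow> real) set \<Rightarrow> 'v filter \<Rightarrow> bool" where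
  "cauchy_filter_sn P F \<longleftrightarrow> F \<noteq> bot \<and> (\<forall>p\<in>P. \<forall>\<epsilon>>0. \<exists>A. eventually (\<lambda>x. x \<in> A) F \<and>
      (\<forall>x\<in>A. \<forall>y\<in>A. p (x - y) < \<epsilon>))"

definition complete_lcs :: "('v::ab_group_add \<Rightarrow> real) set \<Rightarrow> bool" where
  "complete_lcs P \<longleftrightarrow> (\<forall>F. cauchy_filter_sn P F \<longrightarrow> (\<exists>l. limitin (seminorm_top P) (\<lambda>x. x) l F))"

definition absolutely_convex :: "('k::real_normed_field \<Rightarrow> 'v::ab_group_add \<Rightarrow> 'v) \<Rightarrow> 'v set \<Rightarrow> bool" where
  "absolutely_convex smul B \<longleftrightarrow> (\<forall>x\<in>B. \<forall>y\<in>B. \<forall>a b. norm a + norm b \<le> 1 \<longrightarrow> smul a x + smul b y \<in> B)"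

definition absorbing :: "('k::real_normed_field \<Rightarrow> 'v::ab_group_add \<Rightarrow> 'v) \<Rightarrow> 'v set \<Rightarrow> bool" where
  "absorbing smul B \<longleftrightarrow> (\<forall>x. \<exists>t>0. \<forall>c. norm c \<le> t \<longrightarrow> smul c x \<in> B)"

definition barrelled :: "('k::real_normed_field \<Rightarrow> 'v::ab_group_add \<Rightarrow> 'v) \<Rightarrow> ('v \<Rightarrow> real) set \<Rightarrow> bool" where
  "barrelled smul P \<longleftrightarrow> (\<forall>B. closedin (seminorm_top P) B \<and> B \<noteq> {} \<and> absolutely_convex smul B \<and> absorbing smul B
      \<longrightarrow> (\<exists>U. openin (seminorm_top P) U \<and> 0 \<in> U \<and> U \<subseteq> B))"

definition cluster_point_seq :: "'a topology \<Rightarrow> (nat \<Rightarrow> 'a) \<Rightarrow> 'a \<Rightarrow> bool" where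
  "cluster_point_seq T s x \<longleftrightarrow> x \<in> topspace T \<and>
      (\<forall>U. openin T U \<and> x \<in> U \<longrightarrow> (\<exists>\<^sub>F n in sequentially. s n \<in> U))"

definition rel_countably_compact :: "'a topology \<Rightarrow> 'a set \<Rightarrow> bool" where
  "rel_countably_compact T A \<longleftrightarrow> A \<subseteq> topspace T \<and>
      (\<forall>s::nat \<Rightarrow> _. range s \<subseteq> A \<longrightarrow> (\<exists>x. cluster_point_seq T s x))"

definition frechet_urysohn :: "'a topology \<Rightarrow> bool" where
  "frechet_urysohn T \<longleftrightarrow> (\<forall>S x. S \<subseteq> topspace T \<and> x \<in> T closure_of S \<longrightarrow>
      (\<exists>s. range s \<subseteq> S \<and> limitin T s x sequentially))"

definition angelic :: "'a topology \<Rightarrow> bool" where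
  "angelic T \<longleftrightarrow> (\<forall>A. rel_countably_compact T A \<longrightarrow> rel_compact T A) \<and>
      (\<forall>K. compactin T K \<longrightarrow> frechet_urysohn (subtopology T K))"

definition GP where "GP smul P p q \<longleftrightarrow> (\<forall>A. pq_limited smul P p q A \<longrightarrow> rel_compact (seminorm_top P) A)"
definition EGP where "EGP smul P p q \<longleftrightarrow> (\<forall>A. pq_E_limited smul P p q A \<longrightarrow> rel_compact (seminorm_top P) A)"
definition prGP where "prGP smul P p q \<longleftrightarrow> (\<forall>A. pq_limited smul P p q A \<longrightarrow> precompact (seminorm_top P) A)"
definition prEGP where "prEGP smul P p q \<longleftrightarrow> (\<forall>A. pq_E_limited smul P p q A \<longrightarrow> precompact (seminorm_top P) A)"
definition sGP where "sGP smul P p q \<longleftrightarrow> (\<forall>A. pq_limited smul P p q A \<longrightarrow> rel_seq_compact (seminorm_top P) A)"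
definition sEGP where "sEGP smul P p q \<longleftrightarrow> (\<forall>A. pq_E_limited smul P p q A \<longrightarrow> rel_seq_compact (seminorm_top P) A)"
definition spGP where "spGP smul P p q \<longleftrightarrow> (\<forall>A. pq_limited smul P p q A \<longrightarrow> seq_precompact P A)"
definition spEGP where "spEGP smul P p q \<longleftrightarrow> (\<forall>A. pq_E_limited smul P p q A \<longrightarrow> seq_precompact P A)"
definition bGP where "bGP smul P p q \<longleftrightarrow> (\<forall>A. pq_limited smul P p q A \<longrightarrow> precompact (strong_top smul P) A)"

end

theory Submission
  imports Defs "HOL-Computational_Algebra.Fundamental_Theorem_Algebra"
begin

definition evk :: "real poly \<Rightarrow> 'a::real_normed_field \<Rightarrow> 'a" where
  "evk g a = poly (map_poly of_real g) a"

lemma evk_pCons[simp]: "evk (pCons c g) a = of_real c + a * evk g a"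
  unfolding evk_def by (simp add: map_poly_pCons)

lemma evk_0[simp]: "evk 0 a = 0" unfolding evk_def by simp

lemma evk_add[simp]: "evk (g + h) a = evk g a + evk h a"
proof (induction g arbitrary: h)
  case 0 show ?case by simp
next
  case (pCons c g)
  obtain d h' where h: "h = pCons d h'" by (cases h) auto
  show ?case using pCons.IH[of h'] unfolding h by (simp add: algebra_simps)
qed

lemma evk_smult[simp]: "evk (smult c h) a = of_real c * evk h a"
  by (induction h) (simp_all add: algebra_simps)

lemma evk_mult[simp]: "evk (g * h) a = evk g a * evk h a"
  by (induction g) (simp_all add: algebra_simps)

lemma evk_of_real: "evk g (of_real r) = of_real (poly g r)"
  by (induction g) simp_all

lemma evk_quad: "evk [:u, -t, 1:] a = a * a - of_real t * a + of_real u"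
  by (simp add: algebra_simps)

lemma evk_cnj: "evk g (cnj z) = cnj (evk g z)"
  by (induction g) simp_all

lemma degree_le1_form: fixes r :: "real poly" assumes "degree r \<le> 1"
  shows "r = [:coeff r 0, coeff r 1:]"
proof (rule poly_eqI)
  fix n show "coeff r n = coeff [:coeff r 0, coeff r 1:] n"
  proof (cases n)
    case (Suc k) then show ?thesis
      using assms by (cases k) (auto simp: coeff_eq_0)
  qed simp
qed

lemma quad_factor_noroot:
  fixes g :: "real poly"
  assumes deg: "degree g \<ge> 1" and nr: "\<And>r. poly g r \<noteq> 0"
  shows "\<exists>t u h. g = [:u, -t, 1:] * h"
proof -
  have "degree (map_poly complex_of_real g) = degree g" by (rule degree_map_poly) simp
  then have "\<not> constant (poly (map_poly complex_of_real g))" using deg constant_degree[of "map_poly complex_of_real g"] by auto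
  then obtain z :: complex where z: "evk g z = 0" using fundamental_theorem_of_algebra unfolding evk_def by blast
  have Imz: "Im z \<noteq> 0"
  proof
    assume "Im z = 0"
    then have "z = of_real (Re z)" by (simp add: complex_eq_iff)
    then have "of_real (poly g (Re z)) = (0::complex)" using z evk_of_real by metis
    then show False using nr by simp
  qed
  define q where "q = [:(Re z)^2 + (Im z)^2, - (2 * Re z), 1:]"
  have qz: "evk q z = 0" unfolding q_def evk_quad
    by (simp add: complex_eq_iff power2_eq_square algebra_simps)
  have q0: "q \<noteq> 0" unfolding q_def by simp
  have dq: "degree q = 2" unfolding q_def by simp
  define r where "r = g mod q"
  have gq: "g = (g div q) * q + r" unfolding r_def by simp
  have "evk r z = 0" using gq z qz by (metis evk_add evk_mult mult_zero_right add_0)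
  have "r = 0"
  proof (rule ccontr)
    assume "r \<noteq> 0"
    then have "degree r < 2" using degree_mod_less[OF q0, of g] dq unfolding r_def by auto
    then have rf: "r = [:coeff r 0, coeff r 1:]" by (intro degree_le1_form) auto
    have "evk [:coeff r 0, coeff r 1:] z = 0" using \<open>evk r z = 0\<close> rf by simp
    then have "of_real (coeff r 0) + z * of_real (coeff r 1) = (0::complex)" by simp
    then have "Im z * coeff r 1 = 0" "coeff r 0 + Re z * coeff r 1 = 0" by (simp_all add: complex_eq_iff)
    then have "coeff r 1 = 0" "coeff r 0 = 0" using Imz by auto
    then have "r = 0" using rf by simp
    then show False using \<open>r \<noteq> 0\<close> by simp
  qed
  then have "g = q * (g div q)" using gq by (simp add: mult.commute)
  then show ?thesis unfolding q_def by blast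
qed

lemma quad_factor:
  fixes g :: "real poly"
  assumes deg: "degree g \<ge> 2"
  shows "\<exists>t u h. g = [:u, -t, 1:] * h"
proof (cases "\<exists>r. poly g r = 0")
  case False then show ?thesis using quad_factor_noroot[of g] deg by auto
next
  case True
  then obtain r where r: "poly g r = 0" by blast
  then obtain g1 where g1: "g = [:-r, 1:] * g1" using poly_eq_0_iff_dvd dvd_def by metis
  have "g \<noteq> 0" using deg by auto
  then have "g1 \<noteq> 0" using g1 by auto
  have "degree ([:-r, 1:] * g1) = degree [:-r, 1:] + degree g1" by (rule degree_mult_eq) (use \<open>g1 \<noteq> 0\<close> in auto)
  then have "degree g = 1 + degree g1" using g1 by simp
  then have dg1: "degree g1 \<ge> 1" using deg by simp
  show ?thesis
  proof (cases "\<exists>s. poly g1 s = 0")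
    case True
    then obtain s where "poly g1 s = 0" by blast
    then obtain g2 where g2: "g1 = [:-s, 1:] * g2" using poly_eq_0_iff_dvd dvd_def by metis
    have "g = ([:-r, 1:] * [:-s, 1:]) * g2" using g1 g2 by (simp only: mult.assoc)
    also have "[:-r, 1:] * [:-s, 1:] = [:r * s, -(r + s), 1:]" by (simp add: algebra_simps)
    finally show ?thesis by blast
  next
    case False
    then obtain t u h where "g1 = [:u, -t, 1:] * h" using quad_factor_noroot[OF dg1] by blast
    then have "g = [:u, -t, 1:] * ([:-r, 1:] * h)" using g1 by (simp only: ac_simps)
    then show ?thesis by blast
  qed
qed

lemma monic_even_bound:
  fixes a :: "'a::real_normed_field"
  assumes m: "0 \<le> m" and Q: "\<And>t u. m \<le> norm (a * a - of_real t * a + of_real u)"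
  shows "lead_coeff g = 1 \<Longrightarrow> degree g = 2 * d \<Longrightarrow> m ^ d \<le> norm (evk g a)"
proof (induction d arbitrary: g)
  case 0
  then have "g = [:1:]" by (metis coeff_pCons_0 degree_0_id mult_0_right)
  then show ?case by simp
next
  case (Suc d)
  then obtain t u h where gh: "g = [:u, -t, 1:] * h" using quad_factor[of g] by auto
  have q0: "[:u, -t, 1:] \<noteq> 0" by simp
  have "g \<noteq> 0" using Suc.prems by auto
  then have h0: "h \<noteq> 0" using gh by auto
  have "degree g = 2 + degree h" using gh degree_mult_eq[OF q0 h0] by simp
  then have dh: "degree h = 2 * d" using Suc.prems by simp
  have "lead_coeff h = 1" using Suc.prems(1) gh lead_coeff_mult[of "[:u, -t, 1:]" h] by simp
  then have IH: "m ^ d \<le> norm (evk h a)" using Suc.IH dh by blast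
  have "norm (evk g a) = norm (a * a - of_real t * a + of_real u) * norm (evk h a)"
    unfolding gh evk_mult evk_quad norm_mult ..
  also have "\<dots> \<ge> m * m ^ d" using Q IH m by (intro mult_mono) auto
  finally show ?case by simp
qed



lemma inj_lower:
  fixes L :: "'e::euclidean_space \<Rightarrow> 'b::real_normed_vector"
  assumes lin: "linear L" and inj: "\<And>x. L x = 0 \<Longrightarrow> x = 0"
  shows "\<exists>B>0. \<forall>x. B * norm x \<le> norm (L x)"
proof -
  have bl: "bounded_linear L" using lin linear_conv_bounded_linear by blast
  obtain b :: 'e where b: "b \<in> Basis" using nonempty_Basis by blast
  have ne: "sphere (0::'e) 1 \<noteq> {}" using b by (auto intro!: exI[of _ b])
  have "continuous_on (sphere 0 1) (\<lambda>x. norm (L x))"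
    using linear_continuous_on[OF bl] by (intro continuous_on_norm) auto
  then obtain x0 where x0: "x0 \<in> sphere 0 1" "\<And>y. y \<in> sphere 0 1 \<Longrightarrow> norm (L x0) \<le> norm (L y)"
    using continuous_attains_inf[OF compact_sphere ne] by blast
  have "x0 \<noteq> 0" using x0(1) by auto
  then have Bp: "norm (L x0) > 0" using inj by auto
  have "norm (L x0) * norm x \<le> norm (L x)" for x
  proof (cases "x = 0")
    case True then show ?thesis using linear_0[OF lin] by simp
  next
    case False
    have "(1 / norm x) *\<^sub>R x \<in> sphere 0 1" using False by simp
    then have "norm (L x0) \<le> norm (L ((1 / norm x) *\<^sub>R x))" using x0(2) by blast
    also have "\<dots> = norm (L x) / norm x" using linear_scale[OF lin] by simp
    finally show ?thesis using False by (simp add: field_simps)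
  qed
  then show ?thesis using Bp by blast
qed

lemma evk_diff[simp]: "evk (g - h) a = evk g a - evk h a"
  using evk_add[of "g - h" h a] by simp

lemma evk_one[simp]: "evk 1 a = 1"
  by (simp add: one_pCons)

lemma evk_power[simp]: "evk (g ^ n) a = evk g a ^ n"
  by (induction n) simp_all

lemma evk_const[simp]: "evk [:c:] a = of_real c"
  by simp

context
  fixes a :: "'a::real_normed_field"
begin

definition Qf :: "real \<times> real \<Rightarrow> 'a" where
  "Qf z = a * a - of_real (fst z) * a + of_real (snd z)"

lemma cassels_step:
  assumes Q: "\<And>z. m \<le> norm (Qf z)" and m: "m > 0" and tu: "norm (Qf (t, u)) = m"
    and e: "0 < e" "e < m"
  shows "norm (Qf (t, u - e)) = m"
proof -
  define b where "b = Qf (t, u)"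
  have bQ: "Qf (t, u - e) = b - of_real e" unfolding b_def Qf_def by (simp add: algebra_simps)
  define q where "q = [:u, -t, 1:]"
  have qb: "evk q a = b" unfolding q_def b_def Qf_def evk_quad by simp
  have Qq: "\<And>t u. m \<le> norm (a * a - of_real t * a + of_real u)" using Q unfolding Qf_def by force
  have bound: "norm (b - of_real e) * m ^ (n - 1) \<le> m ^ n + e ^ n" if n: "n \<ge> 1" for n
  proof -
    define G where "G = (\<Sum>i<n. [:e:] ^ (n - Suc i) * q ^ i)"
    have id: "q ^ n - [:e:] ^ n = (q - [:e:]) * G" unfolding G_def by (rule power_diff_sumr2)
    have q0: "q \<noteq> 0" unfolding q_def by simp
    have dq: "degree q = 2" "lead_coeff q = 1" unfolding q_def by simp_all
    have dqn: "degree (q ^ n) = 2 * n" using degree_power_eq[OF q0, of n] dq by simp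
    have lqn: "lead_coeff (q ^ n) = 1" using lead_coeff_power[of q n] dq by simp
    have ce: "[:e:] ^ n = [:e ^ n:]" by (induction n) simp_all
    have "q ^ n - [:e ^ n:] = q ^ n + (- [:e ^ n:])" by simp
    moreover have "degree (q ^ n + (- [:e ^ n:])) = degree (q ^ n)"
      by (rule degree_add_eq_left) (use dqn n in simp)
    ultimately have dD: "degree (q ^ n - [:e ^ n:]) = 2 * n" using dqn by metis
    have "coeff [:e ^ n:] (2 * n) = 0" using n by (cases "2 * n") auto
    then have lD: "lead_coeff (q ^ n - [:e ^ n:]) = 1"
      using dD lqn dqn n by simp
    have D0: "q ^ n - [:e ^ n:] \<noteq> 0" using lD by auto
    have qe0: "q - [:e:] \<noteq> 0" and dqe: "degree (q - [:e:]) = 2" and lqe: "lead_coeff (q - [:e:]) = 1"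
      unfolding q_def by simp_all
    have G0: "G \<noteq> 0" using D0 id ce by auto
    have "degree (q ^ n - [:e ^ n:]) = 2 + degree G" using id ce degree_mult_eq[OF qe0 G0] dqe by simp
    then have dG: "degree G = 2 * (n - 1)" using dD n by simp
    have "lead_coeff ((q - [:e:]) * G) = 1" using lD id ce by metis
    then have "lead_coeff (q - [:e:]) * lead_coeff G = 1" by (simp only: lead_coeff_mult)
    then have lG: "lead_coeff G = 1" by (simp only: lqe mult_1)
    have Gb: "m ^ (n - 1) \<le> norm (evk G a)" using monic_even_bound[OF _ Qq lG dG] m by simp
    have "(b - of_real e) * evk G a = b ^ n - of_real e ^ n"
      using arg_cong[OF id, of "\<lambda>g. evk g a"] qb by (simp add: ce)
    then have "norm (b - of_real e) * norm (evk G a) = norm (b ^ n - of_real e ^ n)"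
      by (metis norm_mult)
    also have "\<dots> \<le> norm (b ^ n) + norm ((of_real e :: 'a) ^ n)" by (rule norm_triangle_ineq4)
    also have "\<dots> = m ^ n + e ^ n" using tu e unfolding b_def by (simp add: norm_power)
    finally have "norm (b - of_real e) * norm (evk G a) \<le> m ^ n + e ^ n" .
    moreover have "norm (b - of_real e) * m ^ (n - 1) \<le> norm (b - of_real e) * norm (evk G a)"
      using Gb by (intro mult_left_mono) auto
    ultimately show ?thesis by linarith
  qed
  have le: "norm (b - of_real e) \<le> m + m * (e / m) ^ n" if n: "n \<ge> 1" for n
  proof -
    have mn: "m ^ n = m * m ^ (n - 1)" using n by (cases n) auto
    have "m ^ n > 0" using m by simp
    then have en: "e ^ n = m * m ^ (n - 1) * (e / m) ^ n" unfolding mn[symmetric] power_divide using m by simp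
    have "norm (b - of_real e) * m ^ (n - 1) \<le> (m + m * (e / m) ^ n) * m ^ (n - 1)"
      using bound[OF n] by (simp add: en mn algebra_simps)
    then show ?thesis using m by (simp add: mult_le_cancel_right)
  qed
  have lim: "(\<lambda>n. m + m * (e / m) ^ n) \<longlonglongrightarrow> m + m * 0"
    using e m by (intro tendsto_intros) auto
  have "norm (b - of_real e) \<le> m"
    using lim le by (intro LIMSEQ_le_const[of "\<lambda>n. m + m * (e / m) ^ n"]) (auto intro: exI[of _ 1])
  moreover have "m \<le> norm (b - of_real e)" using Q[of "(t, u - e)"] bQ by simp
  ultimately show ?thesis using bQ by simp
qed

lemma cassels: "\<exists>t u. a * a - of_real t * a + of_real u = 0"
proof (rule ccontr)
  assume nz: "\<not> ?thesis"
  then have nz': "\<And>z. Qf z \<noteq> 0" unfolding Qf_def by auto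
  have notreal: "a \<noteq> of_real r" for r
  proof
    assume "a = of_real r"
    then have "a * a - of_real (2 * r) * a + of_real (r * r) = 0" by (simp add: algebra_simps)
    then show False using nz by blast
  qed
  define L where "L = (\<lambda>z::real \<times> real. of_real (snd z) - of_real (fst z) * a :: 'a)"
  have linL: "linear L" unfolding L_def
    by (rule linearI) (auto simp: algebra_simps scaleR_conv_of_real)
  have injL: "z = 0" if "L z = 0" for z
  proof (cases "fst z = 0")
    case True then show ?thesis using that unfolding L_def by (simp add: prod_eq_iff)
  next
    case False
    then have "a = of_real (snd z / fst z)" using that unfolding L_def by (simp add: field_simps)
    then show ?thesis using notreal by blast
  qed
  obtain B where B: "B > 0" "\<And>z. B * norm z \<le> norm (L z)" using inj_lower[OF linL injL] by blast
  have QL: "Qf z = a * a + L z" for z unfolding Qf_def L_def by simp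
  have Flow: "B * norm z - norm (a * a) \<le> norm (Qf z)" for z
    using B(2)[of z] norm_triangle_ineq2[of "L z" "- (a * a)"] unfolding QL by (simp add: add.commute)
  have contF: "continuous_on S (\<lambda>z. norm (Qf z))" for S unfolding Qf_def by (intro continuous_intros)
  define R where "R = (norm (Qf 0) + norm (a * a)) / B + 1"
  have R0: "R \<ge> 0" unfolding R_def using B by (simp add: divide_nonneg_nonneg)
  then have ne: "cball (0::real \<times> real) R \<noteq> {}" by simp
  from continuous_attains_inf[OF compact_cball ne contF]
  obtain z0 where z0: "z0 \<in> cball 0 R" "\<And>y. y \<in> cball 0 R \<Longrightarrow> norm (Qf z0) \<le> norm (Qf y)"
    by blast
  have zmin: "norm (Qf z0) \<le> norm (Qf y)" for y
  proof (cases "y \<in> cball 0 R")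
    case True then show ?thesis using z0 by blast
  next
    case False
    then have "norm y > R" by (simp add: dist_norm)
    then have "B * norm y > B * R" using B by simp
    also have "B * R = norm (Qf 0) + norm (a * a) + B" unfolding R_def using B by (simp add: field_simps)
    finally have "norm (Qf 0) < norm (Qf y)" using Flow[of y] B by linarith
    moreover have "norm (Qf z0) \<le> norm (Qf 0)" using z0(2)[of 0] R0 by simp
    ultimately show ?thesis by linarith
  qed
  define m where "m = norm (Qf z0)"
  have mpos: "m > 0" unfolding m_def using nz' by simp
  have Qm: "\<And>z. m \<le> norm (Qf z)" unfolding m_def using zmin by blast
  obtain t0 u0 where tu0: "z0 = (t0, u0)" by (cases z0)
  define e where "e = m / 2"
  have e: "0 < e" "e < m" unfolding e_def using mpos by auto
  have allk: "norm (Qf (t0, u0 - real k * e)) = m" for k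
  proof (induction k)
    case 0 then show ?case unfolding m_def tu0 by simp
  next
    case (Suc k)
    have "norm (Qf (t0, u0 - real k * e - e)) = m" by (rule cassels_step[OF Qm mpos Suc e])
    then show ?case by (simp add: algebra_simps)
  qed
  obtain k :: nat where k: "(m + norm (a * a)) / B + \<bar>u0\<bar> < real k * e"
  proof -
    obtain k :: nat where "((m + norm (a * a)) / B + \<bar>u0\<bar>) / e < real k" using reals_Archimedean2 by blast
    then show ?thesis using e that by (simp add: field_simps)
  qed
  have "norm (t0, u0 - real k * e) \<ge> \<bar>u0 - real k * e\<bar>"
    by (metis norm_snd_le real_norm_def snd_conv)
  also have "\<bar>u0 - real k * e\<bar> \<ge> real k * e - \<bar>u0\<bar>" by linarith
  finally have "norm (t0, u0 - real k * e) > (m + norm (a * a)) / B" using k by linarith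
  then have "B * norm (t0, u0 - real k * e) > m + norm (a * a)" using B by (simp add: field_simps)
  then have "norm (Qf (t0, u0 - real k * e)) > m" using Flow[of "(t0, u0 - real k * e)"] by linarith
  then show False using allk[of k] by simp
qed

end



lemma sq_real:
  fixes x :: "'a::real_normed_field"
  assumes "x * x = of_real D" "D \<ge> 0"
  shows "\<exists>r. x = of_real r"
proof -
  have "sqrt D * sqrt D = D" using assms(2) by simp
  then have "of_real (sqrt D) * of_real (sqrt D) = (of_real D :: 'a)"
    by (simp only: of_real_mult[symmetric])
  then have "x * x = of_real (sqrt D) * of_real (sqrt D)" using assms(1) by simp
  then have "x = of_real (sqrt D) \<or> x = - of_real (sqrt D)" by (simp add: square_eq_iff)
  then show ?thesis
  proof
    assume "x = of_real (sqrt D)" then show ?thesis by blast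
  next
    assume "x = - of_real (sqrt D)" then have "x = of_real (- sqrt D)" by simp
    then show ?thesis by blast
  qed
qed

lemma not_real_unit: fixes j :: "'a::real_normed_field" assumes "j * j = -1" shows "j \<noteq> of_real x"
proof
  assume "j = of_real x"
  then have "of_real (x * x) = (of_real (-1) :: 'a)" using assms by simp
  then have "x * x = -1" using of_real_eq_iff by blast
  moreover have "x * x \<ge> 0" by simp
  ultimately show False by linarith
qed

lemma unit_form:
  fixes c :: "'a::real_normed_field"
  shows "(\<exists>r. c = of_real r) \<or> (\<exists>r s k. k * k = -1 \<and> c = of_real r + of_real s * k)"
proof -
  obtain t u where tu: "c * c - of_real t * c + of_real u = 0" using cassels by blast
  define w where "w = c - of_real (t / 2)"
  define D where "D = t * t / 4 - u"
  have ww: "w * w = of_real D"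
  proof -
    have cc: "c * c = of_real t * c - of_real u" using tu by (simp add: algebra_simps)
    have "w * w = c * c - of_real t * c + of_real (t * t / 4)"
      unfolding w_def by (simp add: algebra_simps of_real_mult[symmetric] del: of_real_mult)
    also have "\<dots> = of_real D" unfolding cc D_def by (simp add: algebra_simps)
    finally show ?thesis .
  qed
  show ?thesis
  proof (cases "D \<ge> 0")
    case True
    then obtain r where "w = of_real r" using sq_real[OF ww] by blast
    then have "c = of_real (r + t / 2)" unfolding w_def by (simp add: algebra_simps)
    then show ?thesis by blast
  next
    case False
    define sd where "sd = sqrt (- D)"
    have sd: "sd > 0" "sd * sd = - D" using False unfolding sd_def by auto
    define k where "k = w / of_real sd"
    have "k * k = (w * w) / (of_real sd * of_real sd)" unfolding k_def by (simp add: field_simps)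
    also have "\<dots> = of_real D / of_real (- D)" unfolding ww of_real_mult[symmetric] sd(2) ..
    also have "\<dots> = -1" using False by (simp add: of_real_minus)
    finally have kk: "k * k = -1" .
    have "c = of_real (t / 2) + of_real sd * k" unfolding k_def w_def using sd by simp
    then show ?thesis using kk by blast
  qed
qed

lemma classify:
  "(\<forall>c::'a::real_normed_field. \<exists>r. c = of_real r) \<or>
   (\<exists>j::'a. j * j = -1 \<and> (\<forall>c. \<exists>r s. c = of_real r + of_real s * j))"
proof (cases "\<forall>c::'a. \<exists>r. c = of_real r")
  case True then show ?thesis by blast
next
  case False
  then obtain a :: 'a where "\<forall>r. a \<noteq> of_real r" by blast
  then obtain j :: 'a where j: "j * j = -1" using unit_form[of a] by blast
  have "\<forall>c::'a. \<exists>r s. c = of_real r + of_real s * j"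
  proof
    fix c :: 'a
    show "\<exists>r s. c = of_real r + of_real s * j"
    proof (cases "\<exists>r. c = of_real r")
      case True
      then obtain r where "c = of_real r" by blast
      then have "c = of_real r + of_real 0 * j" by simp
      then show ?thesis by blast
    next
      case False
      then obtain r s k where k: "k * k = -1" "c = of_real r + of_real s * k" using unit_form[of c] by blast
      then have "k * k = j * j" using j by simp
      then have "k = j \<or> k = - j" by (simp add: square_eq_iff)
      then show ?thesis
      proof
        assume "k = j" then show ?thesis using k by blast
      next
        assume "k = - j" then have "c = of_real r + of_real (- s) * j" using k by simp
        then show ?thesis by blast
      qed
    qed
  qed
  then show ?thesis using j by blast
qed

lemma unit_lower:
  fixes j :: "'a::real_normed_field"
  assumes j: "j * j = -1"
  shows "\<exists>C>0. \<forall>r s. C * \<bar>r\<bar> \<le> norm (of_real r + of_real s * j)"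
proof -
  define L where "L = (\<lambda>z::real \<times> real. of_real (fst z) + of_real (snd z) * j)"
  have linL: "linear L" unfolding L_def
    by (rule linearI) (auto simp: algebra_simps scaleR_conv_of_real)
  have injL: "z = 0" if "L z = 0" for z
  proof (cases "snd z = 0")
    case True then show ?thesis using that unfolding L_def by (simp add: prod_eq_iff)
  next
    case False
    have "of_real (fst z) + of_real (snd z) * j = 0" using that unfolding L_def by simp
    then have "of_real (snd z) * j = - of_real (fst z)" by (simp add: eq_neg_iff_add_eq_0 add.commute)
    moreover have "(of_real (snd z) :: 'a) \<noteq> 0" using False by simp
    ultimately have "j = - of_real (fst z) / of_real (snd z)" by (metis nonzero_mult_div_cancel_left)
    then have "j = of_real (- fst z / snd z)" by simp
    then show ?thesis using not_real_unit[OF j] by blast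
  qed
  obtain C where C: "C > 0" "\<And>z. C * norm z \<le> norm (L z)" using inj_lower[OF linL injL] by blast
  have "C * \<bar>r\<bar> \<le> norm (of_real r + of_real s * j)" for r s
  proof -
    have "\<bar>r\<bar> \<le> norm (r, s)" by (metis fst_conv norm_fst_le real_norm_def)
    then have "C * \<bar>r\<bar> \<le> C * norm (r, s)" using C by simp
    also have "\<dots> \<le> norm (L (r, s))" by (rule C(2))
    finally show ?thesis unfolding L_def by simp
  qed
  then show ?thesis using C by blast
qed



definition sball :: "('v::ab_group_add \<Rightarrow> real) set \<Rightarrow> real \<Rightarrow> 'v \<Rightarrow> 'v set" where
  "sball Q e x = {y. \<forall>p\<in>Q. p (y - x) < e}"

lemma openin_snt: "openin (seminorm_top P') U \<longleftrightarrow> (\<forall>x\<in>U. \<exists>Q e. finite Q \<and> Q \<subseteq> P' \<and> e > 0 \<and> sball Q e x \<subseteq> U)"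
  unfolding seminorm_top_def sball_def
  using topology_inverse'[OF istopology_seminorm_top[of P']] by simp

lemma openin_sball_gen:
  assumes "finite Q" "Q \<subseteq> P'" and tri: "\<And>p a b. p \<in> Q \<Longrightarrow> p (a + b) \<le> p a + p b"
  shows "openin (seminorm_top P') (sball Q e x)"
  unfolding openin_snt
proof
  fix y assume y: "y \<in> sball Q e x"
  show "\<exists>Q' e'. finite Q' \<and> Q' \<subseteq> P' \<and> e' > 0 \<and> sball Q' e' y \<subseteq> sball Q e x"
  proof (cases "Q = {}")
    case True then show ?thesis by (auto simp: sball_def intro!: exI[of _ "{}"] exI[of _ 1])
  next
    case False
    define d where "d = e - Max ((\<lambda>p. p (y - x)) ` Q)"
    have "Max ((\<lambda>p. p (y - x)) ` Q) \<in> (\<lambda>p. p (y - x)) ` Q" using False assms by simp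
    then have dpos: "d > 0" using y unfolding d_def sball_def by auto
    have "sball Q d y \<subseteq> sball Q e x"
    proof
      fix z assume z: "z \<in> sball Q d y"
      show "z \<in> sball Q e x"
      proof (unfold sball_def, intro CollectI ballI)
        fix p assume p: "p \<in> Q"
        have "p (y - x) \<le> Max ((\<lambda>p. p (y - x)) ` Q)" using p assms by simp
        moreover have "p (z - x) \<le> p (z - y) + p (y - x)" using tri[OF p, of "z - y" "y - x"] by simp
        moreover have "p (z - y) < d" using z p unfolding sball_def by auto
        ultimately show "p (z - x) < e" unfolding d_def by linarith
      qed
    qed
    then show ?thesis using dpos assms by blast
  qed
qed

locale LCS =
  fixes smul :: "'k::{real_normed_field,banach} \<Rightarrow> 'v::ab_group_add \<Rightarrow> 'v"
    and P :: "('v \<Rightarrow> real) set"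
  assumes lcs: "lcs smul P"
begin

sublocale vs: vector_space smul using lcs unfolding lcs_def by auto

abbreviation "T \<equiv> seminorm_top P"

lemma openin_T: "openin T U \<longleftrightarrow> (\<forall>x\<in>U. \<exists>Q e. finite Q \<and> Q \<subseteq> P \<and> e > 0 \<and> sball Q e x \<subseteq> U)"
  by (rule openin_snt)

lemma topspace_T[simp]: "topspace T = UNIV"
proof -
  have "openin T UNIV" unfolding openin_T by (auto simp: sball_def intro!: exI[of _ "{}"] exI[of _ 1])
  then show ?thesis using openin_subset by blast
qed

lemma semi: "p \<in> P \<Longrightarrow> is_seminorm smul p" using lcs unfolding lcs_def by auto

lemma p_add: "p \<in> P \<Longrightarrow> p (x + y) \<le> p x + p y" using semi unfolding is_seminorm_def by auto
lemma p_scale: "p \<in> P \<Longrightarrow> p (smul c x) = norm c * p x" using semi unfolding is_seminorm_def by auto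
lemma p_zero[simp]: "p \<in> P \<Longrightarrow> p 0 = 0" using p_scale[of p 0 0] by simp
lemma p_neg: "p \<in> P \<Longrightarrow> p (- x) = p x" using p_scale[of p "-1" x] by simp
lemma p_nonneg: "p \<in> P \<Longrightarrow> p x \<ge> 0"
  using p_add[of p x "-x"] p_neg[of p x] by simp
lemma p_commute: "p \<in> P \<Longrightarrow> p (x - y) = p (y - x)" using p_neg[of p "x - y"] by simp
lemma p_tri: "p \<in> P \<Longrightarrow> p (x - z) \<le> p (x - y) + p (y - z)"
  using p_add[of p "x - y" "y - z"] by simp
lemma p_diff: "p \<in> P \<Longrightarrow> p x - p y \<le> p (x - y)"
  using p_add[of p "x - y" y] by simp
lemma p_sep: "x \<noteq> 0 \<Longrightarrow> \<exists>p\<in>P. p x \<noteq> 0" using lcs unfolding lcs_def by auto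

lemma openin_sball: assumes "finite Q" "Q \<subseteq> P" shows "openin T (sball Q e x)"
  using openin_sball_gen[OF assms] p_add assms by blast

lemma center_sball: "e > 0 \<Longrightarrow> Q \<subseteq> P \<Longrightarrow> x \<in> sball Q e x"
  by (auto simp: sball_def)

lemma limitin_T: "limitin T f l F \<longleftrightarrow> (\<forall>p\<in>P. \<forall>e>0. eventually (\<lambda>n. p (f n - l) < e) F)"
proof
  assume L: "limitin T f l F"
  show "\<forall>p\<in>P. \<forall>e>0. eventually (\<lambda>n. p (f n - l) < e) F"
  proof (intro ballI allI impI)
    fix p e assume "p \<in> P" "(e::real) > 0"
    then have "openin T (sball {p} e l)" "l \<in> sball {p} e l"
      using openin_sball[of "{p}"] center_sball[of e "{p}"] by auto
    then have "eventually (\<lambda>n. f n \<in> sball {p} e l) F" using L unfolding limitin_def by blast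
    then show "eventually (\<lambda>n. p (f n - l) < e) F" by (auto simp: sball_def elim: eventually_mono)
  qed
next
  assume R: "\<forall>p\<in>P. \<forall>e>0. eventually (\<lambda>n. p (f n - l) < e) F"
  show "limitin T f l F" unfolding limitin_def
  proof (intro conjI allI impI)
    show "l \<in> topspace T" by simp
    fix U assume "openin T U \<and> l \<in> U"
    then obtain Q e where Q: "finite Q" "Q \<subseteq> P" "e > 0" "sball Q e l \<subseteq> U" using openin_T by meson
    have "eventually (\<lambda>n. \<forall>p\<in>Q. p (f n - l) < e) F"
      using Q R by (intro eventually_ball_finite) auto
    then show "eventually (\<lambda>n. f n \<in> U) F"
      by (rule eventually_mono) (use Q in \<open>auto simp: sball_def\<close>)
  qed
qed

lemma limitin_unique: assumes "limitin T f l F" "limitin T f l' F" "F \<noteq> bot" shows "l = l'"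
proof (rule ccontr)
  assume "l \<noteq> l'"
  then obtain p where p: "p \<in> P" "p (l - l') \<noteq> 0" using p_sep[of "l - l'"] by auto
  define e where "e = p (l - l') / 2"
  have e: "e > 0" using p p_nonneg[of p "l - l'"] unfolding e_def by auto
  have "eventually (\<lambda>n. p (f n - l) < e \<and> p (f n - l') < e) F"
    using assms(1,2) e p unfolding limitin_T by (auto intro: eventually_conj)
  then have "eventually (\<lambda>n. False) F"
  proof (rule eventually_mono)
    fix n assume "p (f n - l) < e \<and> p (f n - l') < e"
    moreover have "p (l - l') \<le> p (l - f n) + p (f n - l')" using p p_tri by blast
    moreover have "p (l - f n) = p (f n - l)" using p p_commute by blast
    ultimately show False unfolding e_def by linarith
  qed
  then show False using assms(3) by simp
qed

end


context LCS begin

lemma openin_translate: assumes "openin T U" shows "openin T ((\<lambda>u. f + u) ` U)"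
  unfolding openin_T
proof
  fix y assume "y \<in> (\<lambda>u. f + u) ` U"
  then obtain u where u: "u \<in> U" "y = f + u" by auto
  then obtain Q e where Q: "finite Q" "Q \<subseteq> P" "e > 0" "sball Q e u \<subseteq> U" using assms openin_T by meson
  have "sball Q e y \<subseteq> (\<lambda>u. f + u) ` U"
  proof
    fix z assume "z \<in> sball Q e y"
    then have "z - f \<in> sball Q e u" using u by (simp add: sball_def algebra_simps)
    then have "z - f \<in> U" using Q by auto
    then show "z \<in> (\<lambda>u. f + u) ` U" by (auto intro: image_eqI[of _ _ "z - f"])
  qed
  then show "\<exists>Q e. finite Q \<and> Q \<subseteq> P \<and> e > 0 \<and> sball Q e y \<subseteq> (\<lambda>u. f + u) ` U" using Q by blast
qed

lemma relcompact_precompact: assumes "rel_compact T A" shows "precompact T A"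
  unfolding precompact_def
proof (intro allI impI)
  fix U assume U: "openin T U \<and> 0 \<in> U"
  define K where "K = T closure_of A"
  have K: "compactin T K" using assms unfolding rel_compact_def K_def by simp
  have AK: "A \<subseteq> K" unfolding K_def by (simp add: closure_of_subset)
  have "K \<subseteq> \<Union>((\<lambda>f. (\<lambda>u. f + u) ` U) ` K)"
    using U by (auto intro!: bexI image_eqI[of _ _ 0])
  moreover have "\<forall>V\<in>(\<lambda>f. (\<lambda>u. f + u) ` U) ` K. openin T V" using U openin_translate by auto
  ultimately obtain \<F> where F: "finite \<F>" "\<F> \<subseteq> (\<lambda>f. (\<lambda>u. f + u) ` U) ` K" "K \<subseteq> \<Union>\<F>"
    using K unfolding compactin_def by meson
  then obtain C where C: "C \<subseteq> K" "finite C" "\<F> = (\<lambda>f. (\<lambda>u. f + u) ` U) ` C"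
    by (meson finite_subset_image)
  show "\<exists>F. finite F \<and> A \<subseteq> (\<Union>f\<in>F. (\<lambda>u. f + u) ` U)"
    using C F AK by (intro exI[of _ C]) auto
qed

lemma limit_cluster:
  assumes "strict_mono r" "limitin T (s \<circ> r) l sequentially"
  shows "cluster_point_seq T s l"
  unfolding cluster_point_seq_def
proof (intro conjI allI impI)
  show "l \<in> topspace T" by simp
  fix U assume U: "openin T U \<and> l \<in> U"
  then have ev: "eventually (\<lambda>n. s (r n) \<in> U) sequentially" using assms(2) unfolding limitin_def by auto
  show "\<exists>\<^sub>F n in sequentially. s n \<in> U"
  proof (rule ccontr)
    assume "\<not> (\<exists>\<^sub>F n in sequentially. s n \<in> U)"
    then have "eventually (\<lambda>n. s n \<notin> U) sequentially" by (simp add: not_frequently)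
    then have "eventually (\<lambda>n. s (r n) \<notin> U) sequentially" using eventually_subseq[OF assms(1)] by blast
    with ev have "eventually (\<lambda>n. False) sequentially" by (rule eventually_elim2) auto
    then show False by simp
  qed
qed

lemma relseqcompact_relcompact:
  assumes ang: "angelic T" and A: "rel_seq_compact T A"
  shows "rel_compact T A"
proof -
  have "rel_countably_compact T A"
    unfolding rel_countably_compact_def
  proof (intro conjI allI impI)
    show "A \<subseteq> topspace T" by simp
    fix s :: "nat \<Rightarrow> 'v" assume "range s \<subseteq> A"
    then obtain r l where "strict_mono r" "limitin T (s \<circ> r) l sequentially"
      using A unfolding rel_seq_compact_def by blast
    then show "\<exists>x. cluster_point_seq T s x" using limit_cluster by blast
  qed
  then show ?thesis using ang unfolding angelic_def by blast
qed

lemma relseqcompact_seqprecompact: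
  assumes A: "rel_seq_compact T A" shows "seq_precompact P A"
  unfolding seq_precompact_def
proof (intro allI impI)
  fix s :: "nat \<Rightarrow> 'v" assume "range s \<subseteq> A"
  then obtain r l where r: "strict_mono r" "limitin T (s \<circ> r) l sequentially"
    using A unfolding rel_seq_compact_def by blast
  have "cauchy_seq_sn P (s \<circ> r)"
    unfolding cauchy_seq_sn_def
  proof (intro ballI allI impI)
    fix p and e :: real assume p: "p \<in> P" and e: "e > 0"
    have "eventually (\<lambda>n. p ((s \<circ> r) n - l) < e/2) sequentially"
      using r(2) p e unfolding limitin_T by (meson half_gt_zero)
    then obtain N where N: "\<And>n. n \<ge> N \<Longrightarrow> p ((s \<circ> r) n - l) < e/2"
      unfolding eventually_sequentially by blast
    show "\<exists>N. \<forall>m\<ge>N. \<forall>n\<ge>N. p ((s \<circ> r) m - (s \<circ> r) n) < e"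
    proof (intro exI allI impI)
      fix m n assume "m \<ge> N" "n \<ge> N"
      moreover have "p ((s \<circ> r) m - (s \<circ> r) n) \<le> p ((s \<circ> r) m - l) + p (l - (s \<circ> r) n)"
        using p p_tri by blast
      moreover have "p (l - (s \<circ> r) n) = p ((s \<circ> r) n - l)" using p p_commute by blast
      moreover have "p ((s \<circ> r) m - l) < e/2" "p ((s \<circ> r) n - l) < e/2" using N calculation by auto
      ultimately show "p ((s \<circ> r) m - (s \<circ> r) n) < e" by linarith
    qed
  qed
  then show "\<exists>r. strict_mono r \<and> cauchy_seq_sn P (s \<circ> r)" using r by blast
qed

lemma cauchy_seq_converges:
  assumes C: "complete_lcs P" and t: "cauchy_seq_sn P t"
  shows "\<exists>l. limitin T t l sequentially"
proof -
  have "cauchy_filter_sn P (filtermap t sequentially)"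
    unfolding cauchy_filter_sn_def
  proof (intro conjI ballI allI impI)
    show "filtermap t sequentially \<noteq> bot" by (simp add: filtermap_bot_iff)
    fix p and e :: real assume p: "p \<in> P" and e: "e > 0"
    then obtain N where N: "\<forall>m\<ge>N. \<forall>n\<ge>N. p (t m - t n) < e" using t unfolding cauchy_seq_sn_def by blast
    show "\<exists>A. eventually (\<lambda>x. x \<in> A) (filtermap t sequentially) \<and> (\<forall>x\<in>A. \<forall>y\<in>A. p (x - y) < e)"
      using N by (intro exI[of _ "t ` {N..}"]) (auto simp: eventually_filtermap eventually_sequentially)
  qed
  then obtain l where "limitin T (\<lambda>x. x) l (filtermap t sequentially)" using C unfolding complete_lcs_def by blast
  then have "limitin T t l sequentially" by (simp add: limitin_def eventually_filtermap)
  then show ?thesis by blast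
qed

lemma seqprecompact_relseqcompact:
  assumes C: "complete_lcs P" and A: "seq_precompact P A" shows "rel_seq_compact T A"
  unfolding rel_seq_compact_def
proof (intro allI impI)
  fix s :: "nat \<Rightarrow> 'v" assume "range s \<subseteq> A"
  then obtain r where r: "strict_mono r" "cauchy_seq_sn P (s \<circ> r)" using A unfolding seq_precompact_def by blast
  then show "\<exists>r l. strict_mono r \<and> limitin T (s \<circ> r) l sequentially"
    using cauchy_seq_converges[OF C r(2)] by blast
qed

end


context LCS begin

lemma dual_mh: "\<phi> \<in> dual smul P \<Longrightarrow> module_hom smul (*) \<phi>"
  unfolding dual_def by (auto simp: linear_iff_module_hom)

lemma dual_add: "\<phi> \<in> dual smul P \<Longrightarrow> \<phi> (x + y) = \<phi> x + \<phi> y"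
  using dual_mh module_hom.add by blast
lemma dual_scale: "\<phi> \<in> dual smul P \<Longrightarrow> \<phi> (smul c x) = c * \<phi> x"
  using dual_mh module_hom.scale by blast
lemma dual_zero: "\<phi> \<in> dual smul P \<Longrightarrow> \<phi> 0 = 0"
  using dual_scale[of \<phi> 0 0] by simp
lemma dual_diff: "\<phi> \<in> dual smul P \<Longrightarrow> \<phi> (x - y) = \<phi> x - \<phi> y"
  using dual_add[of \<phi> "x - y" y] by simp
lemma dual_cont: "\<phi> \<in> dual smul P \<Longrightarrow> continuous_map T euclidean \<phi>"
  unfolding dual_def by auto

lemma barrel_bound:
  assumes bar: "barrelled smul P" and B: "B \<subseteq> dual smul P"
    and bd: "\<And>x. bdd_above ((\<lambda>\<phi>. norm (\<phi> x)) ` B)"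
  shows "\<exists>Q \<delta>. finite Q \<and> Q \<subseteq> P \<and> \<delta> > 0 \<and> (\<forall>x. (\<forall>p\<in>Q. p x < \<delta>) \<longrightarrow> (\<forall>\<phi>\<in>B. norm (\<phi> x) \<le> 1))"
proof -
  define D where "D = {x. \<forall>\<phi>\<in>B. norm (\<phi> x) \<le> 1}"
  have "openin T (topspace T - D)"
  proof (subst openin_subopen, intro ballI)
    fix x assume "x \<in> topspace T - D"
    then obtain \<phi> where \<phi>: "\<phi> \<in> B" "norm (\<phi> x) > 1" unfolding D_def by auto
    have "openin T {y \<in> topspace T. \<phi> y \<in> {z. norm z > 1}}"
      by (rule openin_continuous_map_preimage[OF dual_cont]) (use \<phi> B in \<open>auto intro: open_Collect_less continuous_intros\<close>)
    then show "\<exists>U. openin T U \<and> x \<in> U \<and> U \<subseteq> topspace T - D"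
      using \<phi> by (intro exI[of _ "{y \<in> topspace T. \<phi> y \<in> {z. norm z > 1}}"]) (auto simp: D_def)
  qed
  then have cl: "closedin T D" unfolding closedin_def by simp
  have z: "0 \<in> D" unfolding D_def
  proof (intro CollectI ballI)
    fix \<phi> assume "\<phi> \<in> B" then have "\<phi> 0 = 0" using B dual_zero by blast
    then show "norm (\<phi> 0) \<le> 1" by simp
  qed
  have ac: "absolutely_convex smul D" unfolding absolutely_convex_def
  proof (intro ballI allI impI)
    fix x y and a b :: 'k assume x: "x \<in> D" and y: "y \<in> D" and ab: "norm a + norm b \<le> 1"
    show "smul a x + smul b y \<in> D" unfolding D_def
    proof (intro CollectI ballI)
      fix \<phi> assume \<phi>: "\<phi> \<in> B"
      then have d: "\<phi> \<in> dual smul P" using B by auto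
      have "norm (\<phi> (smul a x + smul b y)) = norm (a * \<phi> x + b * \<phi> y)"
        using d by (simp add: dual_add dual_scale)
      also have "\<dots> \<le> norm a * norm (\<phi> x) + norm b * norm (\<phi> y)"
        by (metis norm_mult norm_triangle_ineq)
      also have "\<dots> \<le> norm a * 1 + norm b * 1"
        using x y \<phi> unfolding D_def by (intro add_mono mult_left_mono) auto
      finally show "norm (\<phi> (smul a x + smul b y)) \<le> 1" using ab by simp
    qed
  qed
  have ab: "absorbing smul D" unfolding absorbing_def
  proof
    fix x
    obtain M where M: "\<And>\<phi>. \<phi> \<in> B \<Longrightarrow> norm (\<phi> x) \<le> M" using bd[of x] unfolding bdd_above_def by auto
    define t where "t = 1 / (\<bar>M\<bar> + 1)"
    have t: "t > 0" unfolding t_def by simp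
    have "\<forall>c. norm c \<le> t \<longrightarrow> smul c x \<in> D"
    proof (intro allI impI)
      fix c :: 'k assume c: "norm c \<le> t"
      show "smul c x \<in> D" unfolding D_def
      proof (intro CollectI ballI)
        fix \<phi> assume \<phi>: "\<phi> \<in> B"
        have "\<phi> (smul c x) = c * \<phi> x" using \<phi> B dual_scale by blast
        then have "norm (\<phi> (smul c x)) = norm c * norm (\<phi> x)" by (simp add: norm_mult)
        also have "\<dots> \<le> t * (\<bar>M\<bar> + 1)" using c M[OF \<phi>] t by (intro mult_mono) auto
        also have "\<dots> = 1" unfolding t_def by simp
        finally show "norm (\<phi> (smul c x)) \<le> 1" .
      qed
    qed
    then show "\<exists>t>0. \<forall>c. norm c \<le> t \<longrightarrow> smul c x \<in> D" using t by blast
  qed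
  obtain U where U: "openin T U" "0 \<in> U" "U \<subseteq> D"
    using bar cl z ac ab unfolding barrelled_def by blast
  then obtain Q \<delta> where Q: "finite Q" "Q \<subseteq> P" "\<delta> > 0" "sball Q \<delta> 0 \<subseteq> U" using openin_T by meson
  show ?thesis
    using Q U by (intro exI[of _ Q] exI[of _ \<delta>]) (auto simp: sball_def D_def)
qed

lemma barrel_bound_scaled:
  assumes "B \<subseteq> dual smul P" "Q \<subseteq> P" "\<delta> > 0" "\<forall>x. (\<forall>p\<in>Q. p x < \<delta>) \<longrightarrow> (\<forall>\<phi>\<in>B. norm (\<phi> x) \<le> 1)"
    and "\<eta> > 0" "\<forall>p\<in>Q. p x < \<delta> * \<eta>" "\<phi> \<in> B"
  shows "norm (\<phi> x) \<le> \<eta>"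
proof -
  define y where "y = smul (of_real (1/\<eta>)) x"
  have "\<forall>p\<in>Q. p y < \<delta>"
  proof
    fix p assume p: "p \<in> Q"
    have "p y = norm (of_real (1/\<eta>) :: 'k) * p x" unfolding y_def using p assms(2) p_scale by blast
    also have "norm (of_real (1/\<eta>) :: 'k) = 1/\<eta>" using assms(5) by (simp only: norm_of_real) simp
    finally have "p y = (1/\<eta>) * p x" .
    also have "(1/\<eta>) * p x < (1/\<eta>) * (\<delta> * \<eta>)" using assms(5,6) p by (intro mult_strict_left_mono) auto
    finally show "p y < \<delta>" using assms(5) by simp
  qed
  then have "norm (\<phi> y) \<le> 1" using assms(4,7) by blast
  moreover have "\<phi> y = of_real (1/\<eta>) * \<phi> x" unfolding y_def using assms(1,7) dual_scale by blast
  ultimately have "norm (of_real (1/\<eta>) * \<phi> x) \<le> 1" by simp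
  then have "(1/\<eta>) * norm (\<phi> x) \<le> 1" using assms(5) by (simp only: norm_mult norm_of_real) simp
  then show ?thesis using assms(5) by (simp add: field_simps)
qed

lemma in_lp_tendsto: assumes "1 \<le> p" "in_lp p s" shows "s \<longlonglongrightarrow> 0"
proof (cases "p = \<infinity>")
  case True then show ?thesis using assms unfolding in_lp_def by simp
next
  case False
  define r where "r = real_of_ereal p"
  have r: "r \<ge> 1" using assms(1) False unfolding r_def
    by (metis ereal_less_eq(1) one_ereal_def real_of_ereal.simps(1) real_of_ereal_le_0 ereal_real' order_trans zero_le_one not_le less_imp_le ereal_le_real_iff) 
  have "summable (\<lambda>n. \<bar>s n\<bar> powr r)" using assms(2) False unfolding in_lp_def r_def by simp
  then have L: "(\<lambda>n. \<bar>s n\<bar> powr r) \<longlonglongrightarrow> 0" by (rule summable_LIMSEQ_zero)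
  show ?thesis
  proof (rule LIMSEQ_I)
    fix e :: real assume e: "e > 0"
    have "e powr r > 0" using e by simp
    then obtain N where N: "\<And>n. n \<ge> N \<Longrightarrow> norm (\<bar>s n\<bar> powr r - 0) < e powr r" using L LIMSEQ_D by blast
    show "\<exists>N. \<forall>n\<ge>N. norm (s n - 0) < e"
    proof (intro exI allI impI)
      fix n assume "n \<ge> N"
      then have "\<bar>s n\<bar> powr r < e powr r" using N by fastforce
      moreover have "\<bar>s n\<bar> \<ge> e \<Longrightarrow> e powr r \<le> \<bar>s n\<bar> powr r" using r e by (intro powr_mono2) auto
      ultimately show "norm (s n - 0) < e" by force
    qed
  qed
qed

lemma wss_bounded:
  assumes "1 \<le> p" "weak_star_summable smul P p \<phi>s"
  shows "bdd_above ((\<lambda>\<phi>. norm (\<phi> x)) ` range \<phi>s)"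
proof -
  have "(\<lambda>n. norm (\<phi>s n x)) \<longlonglongrightarrow> 0" using assms in_lp_tendsto unfolding weak_star_summable_def by blast
  then have "Bseq (\<lambda>n. norm (\<phi>s n x))" using convergent_imp_Bseq convergentI by blast
  then have "bdd_above (range (\<lambda>n. norm (\<phi>s n x)))" by (rule Bseq_bdd_above)
  then show ?thesis by (simp add: image_image)
qed

lemma wss_equicont:
  assumes bar: "barrelled smul P" and "1 \<le> p" and W: "weak_star_summable smul P p \<phi>s"
  shows "equicontinuous T (range \<phi>s)"
proof -
  have B: "range \<phi>s \<subseteq> dual smul P" using W unfolding weak_star_summable_def by auto
  obtain Q \<delta> where Q: "finite Q" "Q \<subseteq> P" "\<delta> > 0" "\<forall>x. (\<forall>p\<in>Q. p x < \<delta>) \<longrightarrow> (\<forall>\<phi>\<in>range \<phi>s. norm (\<phi> x) \<le> 1)"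
    using barrel_bound[OF bar B wss_bounded[OF assms(2,3)]] by blast
  show ?thesis unfolding equicontinuous_def
  proof (intro ballI allI impI)
    fix x0 and e :: real assume e: "e > 0"
    show "\<exists>U. openin T U \<and> x0 \<in> U \<and> (\<forall>\<phi>\<in>range \<phi>s. \<forall>x\<in>U. norm (\<phi> x - \<phi> x0) < e)"
    proof (intro exI conjI ballI)
      show "openin T (sball Q (\<delta> * (e/2)) x0)" using openin_sball Q by blast
      show "x0 \<in> sball Q (\<delta> * (e/2)) x0" using Q e by (intro center_sball) auto
      fix \<phi> x assume \<phi>: "\<phi> \<in> range \<phi>s" and x: "x \<in> sball Q (\<delta> * (e/2)) x0"
      have "norm (\<phi> (x - x0)) \<le> e/2"
        using barrel_bound_scaled[OF B Q(2,3,4), of "e/2" "x - x0" \<phi>] \<phi> x e by (auto simp: sball_def)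
      then show "norm (\<phi> x - \<phi> x0) < e" using \<phi> B e dual_diff by fastforce
    qed
  qed
qed

lemma limited_eq:
  assumes bar: "barrelled smul P" and "1 \<le> p"
  shows "pq_E_limited smul P p q A \<longleftrightarrow> pq_limited smul P p q A"
  unfolding pq_E_limited_def pq_limited_def using wss_equicont[OF bar assms(2)] by blast

end


context LCS begin

definition sB :: "('v \<Rightarrow> 'k) set \<Rightarrow> 'v \<Rightarrow> real" where
  "sB B = (\<lambda>x. Sup (insert 0 ((\<lambda>\<phi>. norm (\<phi> x)) ` B)))"

lemma sB_upper: assumes "\<And>x. bdd_above ((\<lambda>\<phi>. norm (\<phi> x)) ` B)" "\<phi> \<in> B"
  shows "norm (\<phi> x) \<le> sB B x"
  unfolding sB_def using assms by (intro cSup_upper) auto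

lemma sB_nonneg: assumes "\<And>x. bdd_above ((\<lambda>\<phi>. norm (\<phi> x)) ` B)"
  shows "0 \<le> sB B x"
  unfolding sB_def using assms by (intro cSup_upper) auto

lemma sB_least: assumes "0 \<le> M" "\<And>\<phi>. \<phi> \<in> B \<Longrightarrow> norm (\<phi> x) \<le> M"
  shows "sB B x \<le> M"
  unfolding sB_def using assms by (intro cSup_least) auto

lemma sB_tri: assumes B: "B \<subseteq> dual smul P" and bd: "\<And>x. bdd_above ((\<lambda>\<phi>. norm (\<phi> x)) ` B)"
  shows "sB B (a + b) \<le> sB B a + sB B b"
proof (rule sB_least)
  show "0 \<le> sB B a + sB B b" using sB_nonneg[OF bd] by (simp add: add_nonneg_nonneg)
  fix \<phi> assume \<phi>: "\<phi> \<in> B"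
  have "norm (\<phi> (a + b)) = norm (\<phi> a + \<phi> b)" using \<phi> B dual_add by auto
  also have "\<dots> \<le> norm (\<phi> a) + norm (\<phi> b)" by (rule norm_triangle_ineq)
  also have "\<dots> \<le> sB B a + sB B b" using sB_upper[OF bd \<phi>] by (simp add: add_mono)
  finally show "norm (\<phi> (a + b)) \<le> sB B a + sB B b" .
qed

lemma strong_sB: "q \<in> strong_seminorms smul P \<longleftrightarrow>
   (\<exists>B. B \<subseteq> dual smul P \<and> (\<forall>x. bdd_above ((\<lambda>\<phi>. norm (\<phi> x)) ` B)) \<and> q = sB B)"
  unfolding strong_seminorms_def sB_def by auto

lemma precompact_strong:
  assumes bar: "barrelled smul P" and A: "precompact T A"
  shows "precompact (strong_top smul P) A"
  unfolding precompact_def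
proof (intro allI impI)
  fix W assume W: "openin (strong_top smul P) W \<and> 0 \<in> W"
  then obtain Q' \<epsilon> where Q': "finite Q'" "Q' \<subseteq> strong_seminorms smul P" "\<epsilon> > 0" "sball Q' \<epsilon> 0 \<subseteq> W"
    unfolding strong_top_def openin_snt by meson
  define G where "G q z \<longleftrightarrow> finite (fst z) \<and> fst z \<subseteq> P \<and> snd z > 0 \<and> (\<forall>y. (\<forall>p\<in>fst z. p y < snd z * (\<epsilon>/2)) \<longrightarrow> q y < \<epsilon>)" for q z
  have ex: "\<exists>z. G q z" if "q \<in> Q'" for q
  proof -
    have "q \<in> strong_seminorms smul P" using that Q'(2) by blast
    then obtain B where B: "B \<subseteq> dual smul P" "\<And>x. bdd_above ((\<lambda>\<phi>. norm (\<phi> x)) ` B)" "q = sB B"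
      unfolding strong_sB by blast
    obtain Qq \<delta> where Qq: "finite Qq" "Qq \<subseteq> P" "\<delta> > 0" "\<forall>x. (\<forall>p\<in>Qq. p x < \<delta>) \<longrightarrow> (\<forall>\<phi>\<in>B. norm (\<phi> x) \<le> 1)"
      using barrel_bound[OF bar B(1,2)] by blast
    have "\<forall>y. (\<forall>p\<in>Qq. p y < \<delta> * (\<epsilon>/2)) \<longrightarrow> q y < \<epsilon>"
    proof (intro allI impI)
      fix y assume y: "\<forall>p\<in>Qq. p y < \<delta> * (\<epsilon>/2)"
      have "sB B y \<le> \<epsilon>/2"
      proof (rule sB_least)
        show "0 \<le> \<epsilon>/2" using Q'(3) by simp
        fix \<phi> assume "\<phi> \<in> B"
        then show "norm (\<phi> y) \<le> \<epsilon>/2"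
          using barrel_bound_scaled[OF B(1) Qq(2,3,4), of "\<epsilon>/2" y] y Q'(3) by simp
      qed
      then show "q y < \<epsilon>" using B(3) Q'(3) by simp
    qed
    then show ?thesis unfolding G_def using Qq by (intro exI[of _ "(Qq, \<delta>)"]) simp
  qed
  define QQ where "QQ q = fst (SOME z. G q z)" for q
  define dd where "dd q = snd (SOME z. G q z)" for q
  have QQ: "finite (QQ q) \<and> QQ q \<subseteq> P \<and> dd q > 0 \<and> (\<forall>y. (\<forall>p\<in>QQ q. p y < dd q * (\<epsilon>/2)) \<longrightarrow> q y < \<epsilon>)" if "q \<in> Q'" for q
    using someI_ex[OF ex[OF that]] unfolding QQ_def dd_def G_def by blast
  show "\<exists>F. finite F \<and> A \<subseteq> (\<Union>f\<in>F. (\<lambda>u. f + u) ` W)"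
  proof (cases "Q' = {}")
    case True
    then have "W = UNIV" using Q' by (auto simp: sball_def)
    then show ?thesis by (intro exI[of _ "{0}"]) auto
  next
    case False
    define \<delta> where "\<delta> = Min (dd ` Q')"
    define Qa where "Qa = (\<Union>q\<in>Q'. QQ q)"
    have ddp: "dd q > 0" and fQ: "finite (QQ q)" and sQ: "QQ q \<subseteq> P" if "q \<in> Q'" for q
      using QQ[OF that] by blast+
    have \<delta>: "\<delta> > 0" unfolding \<delta>_def using False Q'(1) ddp by (subst Min_gr_iff) auto
    have Qa: "finite Qa" "Qa \<subseteq> P" unfolding Qa_def using fQ sQ Q'(1) by auto
    define V where "V = sball Qa (\<delta> * (\<epsilon>/2)) 0"
    have V1: "openin T V" unfolding V_def by (rule openin_sball[OF Qa])
    have V2: "0 \<in> V" unfolding V_def by (rule center_sball) (use \<delta> Q'(3) Qa in auto)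
    note V = V1 V2
    have VW: "V \<subseteq> W"
    proof
      fix y assume y: "y \<in> V"
      have "\<forall>q\<in>Q'. q y < \<epsilon>"
      proof
        fix q assume q: "q \<in> Q'"
        have "\<delta> \<le> dd q" unfolding \<delta>_def using q Q'(1) by simp
        have "\<forall>p\<in>QQ q. p y < dd q * (\<epsilon>/2)"
        proof
          fix p assume "p \<in> QQ q"
          then have "p y < \<delta> * (\<epsilon>/2)" using y q unfolding V_def sball_def Qa_def by auto
          also have "\<dots> \<le> dd q * (\<epsilon>/2)" using \<open>\<delta> \<le> dd q\<close> Q'(3) by (intro mult_right_mono) auto
          finally show "p y < dd q * (\<epsilon>/2)" .
        qed
        then show "q y < \<epsilon>" using QQ[OF q] by blast
      qed
      then have "y \<in> sball Q' \<epsilon> 0" by (simp add: sball_def)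
      then show "y \<in> W" using Q' by blast
    qed
    obtain F where F: "finite F" "A \<subseteq> (\<Union>f\<in>F. (\<lambda>u. f + u) ` V)"
      using A[unfolded precompact_def, rule_format, OF conjI[OF V1 V2]] by blast
    have "(\<Union>f\<in>F. (\<lambda>u. f + u) ` V) \<subseteq> (\<Union>f\<in>F. (\<lambda>u. f + u) ` W)" by (rule UN_mono) (use VW in auto)
    with F(2) have "A \<subseteq> (\<Union>f\<in>F. (\<lambda>u. f + u) ` W)" by (rule order_trans)
    then show ?thesis using F(1) by blast
  qed
qed

lemma strong_precompact:
  assumes HB: "\<exists>c>0. \<forall>p\<in>P. \<forall>x0. \<exists>\<phi>\<in>dual smul P. (\<forall>x. norm (\<phi> x) \<le> p x) \<and> c * p x0 \<le> norm (\<phi> x0)"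
    and A: "precompact (strong_top smul P) A"
  shows "precompact T A"
  unfolding precompact_def
proof (intro allI impI)
  obtain c where c: "c > 0" "\<And>p x0. p \<in> P \<Longrightarrow> \<exists>\<phi>\<in>dual smul P. (\<forall>x. norm (\<phi> x) \<le> p x) \<and> c * p x0 \<le> norm (\<phi> x0)"
    using HB by blast
  define Bp where "Bp p = {\<phi> \<in> dual smul P. \<forall>x. norm (\<phi> x) \<le> p x}" for p
  have bd: "bdd_above ((\<lambda>\<phi>. norm (\<phi> x)) ` Bp p)" for p x
    by (rule bdd_aboveI[of _ "p x"]) (auto simp: Bp_def)
  have low: "c * p x \<le> sB (Bp p) x" if pP: "p \<in> P" for p x
  proof -
    obtain \<phi> where \<phi>: "\<phi> \<in> dual smul P" "\<forall>x. norm (\<phi> x) \<le> p x" "c * p x \<le> norm (\<phi> x)" using c(2)[OF pP] by blast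
    then have "\<phi> \<in> Bp p" unfolding Bp_def by blast
    then have "norm (\<phi> x) \<le> sB (Bp p) x" by (rule sB_upper[OF bd])
    then show ?thesis using \<phi>(3) by linarith
  qed
  fix U assume U: "openin T U \<and> 0 \<in> U"
  then obtain Q e where Q: "finite Q" "Q \<subseteq> P" "e > 0" "sball Q e 0 \<subseteq> U" using openin_T by meson
  define Q' where "Q' = (\<lambda>p. sB (Bp p)) ` Q"
  have Q'str: "Q' \<subseteq> strong_seminorms smul P"
  proof
    fix q assume "q \<in> Q'"
    then obtain p where qp: "q = sB (Bp p)" unfolding Q'_def by auto
    have "Bp p \<subseteq> dual smul P" unfolding Bp_def by auto
    then show "q \<in> strong_seminorms smul P" unfolding strong_sB using bd qp by (intro exI[of _ "Bp p"]) simp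
  qed
  have tri: "q (a + b) \<le> q a + q b" if qQ: "q \<in> Q'" for q a b
  proof -
    obtain p where qp: "q = sB (Bp p)" using qQ unfolding Q'_def by auto
    have "Bp p \<subseteq> dual smul P" unfolding Bp_def by auto
    from sB_tri[OF this bd] show ?thesis unfolding qp .
  qed
  define W where "W = sball Q' (c * e) 0"
  have "finite Q'" unfolding Q'_def using Q by simp
  then have W1: "openin (strong_top smul P) W"
    unfolding W_def strong_top_def by (rule openin_sball_gen[OF _ Q'str tri])
  have W2: "0 \<in> W"
  proof -
    have "\<forall>q\<in>Q'. q 0 < c * e"
    proof
      fix q assume "q \<in> Q'"
      then obtain p where "q = sB (Bp p)" unfolding Q'_def by auto
      moreover have "sB (Bp p) 0 \<le> 0"
        by (rule sB_least) (auto simp: Bp_def dual_zero)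
      moreover have "0 < c * e" using c Q by (simp add: mult_pos_pos)
      ultimately show "q 0 < c * e" by simp
    qed
    then show ?thesis unfolding W_def sball_def by simp
  qed
  note W = W1 W2
  have WU: "W \<subseteq> U"
  proof
    fix y assume y: "y \<in> W"
    have "\<forall>p\<in>Q. p y < e"
    proof
      fix p assume p: "p \<in> Q"
      have "sB (Bp p) y < c * e" using y p unfolding W_def sball_def Q'_def by auto
      then have "c * p y < c * e" using low[of p y] p Q by auto
      then show "p y < e" using c by simp
    qed
    then show "y \<in> U" using Q by (auto simp: sball_def)
  qed
  obtain F where F: "finite F" "A \<subseteq> (\<Union>f\<in>F. (\<lambda>u. f + u) ` W)"
    using A[unfolded precompact_def, rule_format, OF conjI[OF W1 W2]] by blast
  have "(\<Union>f\<in>F. (\<lambda>u. f + u) ` W) \<subseteq> (\<Union>f\<in>F. (\<lambda>u. f + u) ` U)" by (rule UN_mono) (use WU in auto)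
  with F(2) have "A \<subseteq> (\<Union>f\<in>F. (\<lambda>u. f + u) ` U)" by (rule order_trans)
  then show "\<exists>F. finite F \<and> A \<subseteq> (\<Union>f\<in>F. (\<lambda>u. f + u) ` U)" using F(1) by blast
qed

end


lemma extract_mono:
  fixes f :: "nat \<Rightarrow> nat"
  assumes "\<And>N. \<exists>K. \<forall>k\<ge>K. N \<le> f k"
  shows "\<exists>r::nat\<Rightarrow>nat. strict_mono r \<and> strict_mono (f \<circ> r)"
proof -
  have ex: "\<exists>k. k > n \<and> f k > f n" for n
  proof -
    obtain K where K: "\<forall>k\<ge>K. Suc (f n) \<le> f k" using assms by blast
    show ?thesis using K[rule_format, of "max K (Suc n)"] by (intro exI[of _ "max K (Suc n)"]) auto
  qed
  define nxt where "nxt n = (SOME k. k > n \<and> f k > f n)" for n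
  have nxt: "nxt n > n \<and> f (nxt n) > f n" for n unfolding nxt_def using someI_ex[OF ex] by blast
  define r where "r n = (nxt ^^ n) 0" for n
  have rS: "r (Suc n) = nxt (r n)" for n unfolding r_def by simp
  have "strict_mono r" unfolding strict_mono_Suc_iff using nxt rS by simp
  moreover have "strict_mono (f \<circ> r)" unfolding strict_mono_Suc_iff using nxt rS by simp
  ultimately show ?thesis by blast
qed

context LCS begin

lemma compact_cluster:
  assumes K: "compactin T K" and s: "range s \<subseteq> K"
  shows "\<exists>x\<in>K. cluster_point_seq T s x"
proof (rule ccontr)
  assume "\<not> ?thesis"
  then have "\<forall>x\<in>K. \<exists>U. openin T U \<and> x \<in> U \<and> eventually (\<lambda>n. s n \<notin> U) sequentially"
    unfolding cluster_point_seq_def by (auto simp: not_frequently)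
  from bchoice[OF this] obtain Ux where Ux0: "\<forall>x\<in>K. openin T (Ux x) \<and> x \<in> Ux x \<and> eventually (\<lambda>n. s n \<notin> Ux x) sequentially"
    by blast
  then have Ux: "\<And>x. x \<in> K \<Longrightarrow> openin T (Ux x) \<and> x \<in> Ux x \<and> eventually (\<lambda>n. s n \<notin> Ux x) sequentially"
    by blast
  have "K \<subseteq> \<Union>(Ux ` K)" using Ux by blast
  moreover have "\<forall>U\<in>Ux ` K. openin T U" using Ux by blast
  ultimately obtain \<F> where F: "finite \<F>" "\<F> \<subseteq> Ux ` K" "K \<subseteq> \<Union>\<F>"
    using K unfolding compactin_def by meson
  then obtain C where C: "C \<subseteq> K" "finite C" "\<F> = Ux ` C" by (meson finite_subset_image)
  have "eventually (\<lambda>n. \<forall>x\<in>C. s n \<notin> Ux x) sequentially"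
    using C Ux by (intro eventually_ball_finite) auto
  then obtain n where "\<forall>x\<in>C. s n \<notin> Ux x" using eventually_sequentially by auto
  moreover have "s n \<in> K" using s by auto
  then have "s n \<in> \<Union>\<F>" using F(3) by blast
  ultimately show False using C by auto
qed

lemma limitin_subseq:
  assumes "limitin T t x sequentially" "strict_mono r"
  shows "limitin T (t \<circ> r) x sequentially"
  using assms unfolding limitin_T by (auto intro: eventually_subseq)

lemma relcompact_relseqcompact:
  assumes ang: "angelic T" and A: "rel_compact T A"
  shows "rel_seq_compact T A"
  unfolding rel_seq_compact_def
proof (intro allI impI)
  fix s :: "nat \<Rightarrow> 'v" assume sA: "range s \<subseteq> A"
  define K where "K = T closure_of A"
  have K: "compactin T K" using A unfolding rel_compact_def K_def by simp
  have AK: "A \<subseteq> K" unfolding K_def by (simp add: closure_of_subset)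
  have FU: "frechet_urysohn (subtopology T K)" using ang K unfolding angelic_def by blast
  obtain x where x: "x \<in> K" "cluster_point_seq T s x" using compact_cluster[OF K] sA AK by blast
  show "\<exists>r l. strict_mono r \<and> limitin T (s \<circ> r) l sequentially"
  proof (cases "finite {n. s n = x}")
    case False
    define r where "r = enumerate {n. s n = x}"
    have "strict_mono r" unfolding r_def using False by (simp add: strict_mono_enumerate)
    moreover have "s \<circ> r = (\<lambda>n. x)" unfolding r_def using enumerate_in_set[OF False] by auto
    ultimately show ?thesis by (intro exI[of _ r] exI[of _ x]) simp
  next
    case True
    then obtain N0 where N0': "\<forall>n\<in>{n. s n = x}. n < N0"
      unfolding finite_nat_set_iff_bounded by blast
    then have N0: "\<And>n. s n = x \<Longrightarrow> n < N0" by blast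
    define S where "S = s ` {n. s n \<noteq> x}"
    have SK: "S \<subseteq> K" unfolding S_def using sA AK by auto
    have "x \<in> T closure_of S"
      unfolding in_closure_of
    proof (intro conjI allI impI)
      show "x \<in> topspace T" by simp
      fix U assume U: "x \<in> U \<and> openin T U"
      then have "\<exists>\<^sub>F n in sequentially. s n \<in> U" using x unfolding cluster_point_seq_def by blast
      moreover have "eventually (\<lambda>n. s n \<noteq> x) sequentially"
        unfolding eventually_sequentially
      proof (intro exI[of _ N0] allI impI)
        fix n assume "N0 \<le> n"
        then show "s n \<noteq> x" using N0[of n] by linarith
      qed
      ultimately have "\<exists>\<^sub>F n in sequentially. s n \<in> U \<and> s n \<noteq> x" by (rule frequently_eventually_frequently)
      then obtain n where "s n \<in> U" "s n \<noteq> x" using frequently_ex by blast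
      then show "\<exists>y. y \<in> S \<and> y \<in> U" unfolding S_def by blast
    qed
    then have "x \<in> (subtopology T K) closure_of S"
      using x SK by (simp add: closure_of_subtopology Int_absorb1)
    moreover have "S \<subseteq> topspace (subtopology T K)" using SK by simp
    ultimately obtain t where t: "range t \<subseteq> S" "limitin (subtopology T K) t x sequentially"
      using FU unfolding frechet_urysohn_def by blast
    then have tx: "limitin T t x sequentially" by (simp add: limitin_subtopology)
    have "\<forall>k. \<exists>n. s n \<noteq> x \<and> t k = s n" using t(1) unfolding S_def by blast
    from choice[OF this] obtain idx where idx0: "\<forall>k. s (idx k) \<noteq> x \<and> t k = s (idx k)" by blast
    then have idx: "\<And>k. s (idx k) \<noteq> x \<and> t k = s (idx k)" by blast
    have big: "\<exists>K. \<forall>k\<ge>K. N \<le> idx k" for N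
    proof -
      define Y where "Y = s ` ({..<N} \<inter> {n. s n \<noteq> x})"
      have Yf: "finite Y" unfolding Y_def by simp
      have "\<forall>y\<in>Y. eventually (\<lambda>k. t k \<noteq> y) sequentially"
      proof
        fix y assume "y \<in> Y"
        then have "y - x \<noteq> 0" unfolding Y_def by auto
        then obtain p where p: "p \<in> P" "p (y - x) \<noteq> 0" using p_sep by blast
        then have pp: "p (y - x) > 0" using p_nonneg[of p "y - x"] by auto
        have "eventually (\<lambda>k. p (t k - x) < p (y - x)) sequentially" using tx p pp unfolding limitin_T by blast
        then show "eventually (\<lambda>k. t k \<noteq> y) sequentially" by (rule eventually_mono) auto
      qed
      then have "eventually (\<lambda>k. \<forall>y\<in>Y. t k \<noteq> y) sequentially" using Yf by (intro eventually_ball_finite) auto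
      then obtain K where K: "\<And>k. k \<ge> K \<Longrightarrow> \<forall>y\<in>Y. t k \<noteq> y" unfolding eventually_sequentially by blast
      have "N \<le> idx k" if "k \<ge> K" for k
      proof (rule ccontr)
        assume "\<not> N \<le> idx k"
        then have "t k \<in> Y" unfolding Y_def using idx[of k] by auto
        then show False using K[OF that] by blast
      qed
      then show ?thesis by blast
    qed
    obtain r :: "nat \<Rightarrow> nat" where r: "strict_mono r" "strict_mono (idx \<circ> r)" using extract_mono[OF big] by blast
    have "s \<circ> (idx \<circ> r) = t \<circ> r" using idx by (auto simp: fun_eq_iff)
    then have "limitin T (s \<circ> (idx \<circ> r)) x sequentially" using limitin_subseq[OF tx r(1)] by simp
    then show ?thesis using r(2) by blast
  qed
qed

end


definition goodF :: "nat set set \<Rightarrow> bool" where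
  "goodF M \<longleftrightarrow> (\<forall>X\<in>M. \<forall>Y. X \<subseteq> Y \<longrightarrow> Y \<in> M) \<and> (\<forall>X\<in>M. \<forall>Y\<in>M. X \<inter> Y \<in> M) \<and> {} \<notin> M
     \<and> (\<forall>X. finite (- X) \<longrightarrow> X \<in> M)"

lemma goodF_up: "goodF M \<Longrightarrow> X \<in> M \<Longrightarrow> X \<subseteq> Y \<Longrightarrow> Y \<in> M" unfolding goodF_def by blast
lemma goodF_int: "goodF M \<Longrightarrow> X \<in> M \<Longrightarrow> Y \<in> M \<Longrightarrow> X \<inter> Y \<in> M" unfolding goodF_def by blast
lemma goodF_empty: "goodF M \<Longrightarrow> {} \<notin> M" unfolding goodF_def by blast
lemma goodF_cof: "goodF M \<Longrightarrow> finite (- X) \<Longrightarrow> X \<in> M" unfolding goodF_def by blast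
lemma goodF_UNIV: "goodF M \<Longrightarrow> UNIV \<in> M" using goodF_cof[of M UNIV] by simp
lemma goodFI:
  assumes "\<And>X Y. X \<in> M \<Longrightarrow> X \<subseteq> Y \<Longrightarrow> Y \<in> M" "\<And>X Y. X \<in> M \<Longrightarrow> Y \<in> M \<Longrightarrow> X \<inter> Y \<in> M" "{} \<notin> M"
    "\<And>X. finite (- X) \<Longrightarrow> X \<in> M"
  shows "goodF M" unfolding goodF_def using assms by blast

lemma goodF_cofinite: "goodF {X. finite (- X)}"
proof (rule goodFI)
  fix X Y :: "nat set" assume "X \<in> {X. finite (- X)}" "X \<subseteq> Y"
  then show "Y \<in> {X. finite (- X)}" by (auto intro: finite_subset)
next
  fix X Y :: "nat set" assume "X \<in> {X. finite (- X)}" "Y \<in> {X. finite (- X)}"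
  then show "X \<inter> Y \<in> {X. finite (- X)}" by auto
qed auto

lemma ultra_exists: "\<exists>M. goodF M \<and> (\<forall>X. X \<in> M \<or> - X \<in> M)"
proof -
  have "\<exists>M\<in>{M. goodF M}. \<forall>X\<in>{M. goodF M}. M \<subseteq> X \<longrightarrow> X = M"
  proof (rule subset_Zorn)
    fix C assume C: "subset.chain {M. goodF M} C"
    show "\<exists>U\<in>{M. goodF M}. \<forall>X\<in>C. X \<subseteq> U"
    proof (cases "C = {}")
      case True then show ?thesis using goodF_cofinite by blast
    next
      case False
      have CC: "\<And>X. X \<in> C \<Longrightarrow> goodF X" and tot: "\<And>X Y. X \<in> C \<Longrightarrow> Y \<in> C \<Longrightarrow> X \<subseteq> Y \<or> Y \<subseteq> X"
        using C unfolding subset.chain_def by auto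
      have "goodF (\<Union>C)"
      proof (rule goodFI)
        fix X Y assume "X \<in> \<Union>C" "X \<subseteq> Y"
        then obtain M1 where "M1 \<in> C" "X \<in> M1" by blast
        then have "Y \<in> M1" using goodF_up[OF CC] \<open>X \<subseteq> Y\<close> by blast
        then show "Y \<in> \<Union>C" using \<open>M1 \<in> C\<close> by blast
      next
        fix X Y assume X: "X \<in> \<Union>C" and Y: "Y \<in> \<Union>C"
        then obtain M1 M2 where M: "M1 \<in> C" "M2 \<in> C" "X \<in> M1" "Y \<in> M2" by blast
        show "X \<inter> Y \<in> \<Union>C"
        proof (cases "M1 \<subseteq> M2")
          case True
          then have "X \<inter> Y \<in> M2" using M goodF_int[OF CC[OF M(2)]] by blast
          then show ?thesis using M(2) by blast
        next
          case False then have "M2 \<subseteq> M1" using tot M by blast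
          then have "X \<inter> Y \<in> M1" using M goodF_int[OF CC[OF M(1)]] by blast
          then show ?thesis using M(1) by blast
        qed
      next
        show "{} \<notin> \<Union>C" using CC goodF_empty by blast
      next
        fix X :: "nat set" assume X: "finite (- X)"
        obtain M where "M \<in> C" using False by blast
        then have "X \<in> M" using goodF_cof[OF CC X] by blast
        then show "X \<in> \<Union>C" using \<open>M \<in> C\<close> by blast
      qed
      then show ?thesis by blast
    qed
  qed
  then obtain M where M: "goodF M" "\<And>X. goodF X \<Longrightarrow> M \<subseteq> X \<Longrightarrow> X = M" by blast
  have "X \<in> M \<or> - X \<in> M" for X
  proof (rule ccontr)
    assume nX: "\<not> (X \<in> M \<or> - X \<in> M)"
    define M' where "M' = {Y. \<exists>Z\<in>M. Z \<inter> X \<subseteq> Y}"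
    have "{} \<notin> M'"
    proof
      assume "{} \<in> M'"
      then obtain Z where "Z \<in> M" "Z \<inter> X \<subseteq> {}" unfolding M'_def by blast
      then have "Z \<subseteq> - X" by blast
      then have "- X \<in> M" using goodF_up[OF M(1) \<open>Z \<in> M\<close>] by blast
      then show False using nX by blast
    qed
    have "goodF M'"
    proof (rule goodFI)
      fix Y Y' assume "Y \<in> M'" "Y \<subseteq> Y'" then show "Y' \<in> M'" unfolding M'_def by blast
    next
      fix Y1 Y2 assume "Y1 \<in> M'" "Y2 \<in> M'"
      then obtain Z1 Z2 where Z: "Z1 \<in> M" "Z2 \<in> M" "Z1 \<inter> X \<subseteq> Y1" "Z2 \<inter> X \<subseteq> Y2" unfolding M'_def by blast
      have "Z1 \<inter> Z2 \<in> M" using goodF_int[OF M(1) Z(1,2)] .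
      moreover have "(Z1 \<inter> Z2) \<inter> X \<subseteq> Y1 \<inter> Y2" using Z by blast
      ultimately show "Y1 \<inter> Y2 \<in> M'" unfolding M'_def by blast
    next
      show "{} \<notin> M'" by fact
    next
      fix Y :: "nat set" assume "finite (- Y)"
      then have "Y \<in> M" using goodF_cof[OF M(1)] by blast
      then show "Y \<in> M'" unfolding M'_def by blast
    qed
    moreover have "M \<subseteq> M'" unfolding M'_def by blast
    ultimately have "M' = M" using M(2) by blast
    moreover have "X \<in> M'" unfolding M'_def using goodF_UNIV[OF M(1)] by blast
    ultimately show False using nX by blast
  qed
  then show ?thesis using M(1) by blast
qed

lemma ultra_finite_union:
  assumes M: "goodF M" "\<forall>X. X \<in> M \<or> - X \<in> M" and I: "finite I"
  shows "(\<Union>i\<in>I. B i) \<in> M \<Longrightarrow> \<exists>i\<in>I. B i \<in> M"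
  using I
proof (induction I rule: finite_induct)
  case empty then show ?case using goodF_empty[OF M(1)] by simp
next
  case (insert a I)
  show ?case
  proof (cases "B a \<in> M")
    case True then show ?thesis by blast
  next
    case False
    then have "- B a \<in> M" using M(2) by blast
    then have "(\<Union>i\<in>insert a I. B i) \<inter> - B a \<in> M" using goodF_int[OF M(1) insert.prems] by blast
    moreover have "(\<Union>i\<in>insert a I. B i) \<inter> - B a \<subseteq> (\<Union>i\<in>I. B i)" by blast
    ultimately have "(\<Union>i\<in>I. B i) \<in> M" using goodF_up[OF M(1)] by blast
    then show ?thesis using insert.IH by blast
  qed
qed

context LCS begin

lemma precompact_relcompact:
  assumes ang: "angelic T" and C: "complete_lcs P" and A: "precompact T A"
  shows "rel_compact T A"
proof -
  obtain M where M: "goodF M" "\<forall>X. X \<in> M \<or> - X \<in> M" using ultra_exists by blast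
  note Mup = goodF_up[OF M(1)] and Mint = goodF_int[OF M(1)] and Me = goodF_empty[OF M(1)]
    and Mcof = goodF_cof[OF M(1)]
  have "rel_countably_compact T A"
    unfolding rel_countably_compact_def
  proof (intro conjI allI impI)
    show "A \<subseteq> topspace T" by simp
    fix s :: "nat \<Rightarrow> 'v" assume sA: "range s \<subseteq> A"
    define G where "G = (\<lambda>Q::'v \<Rightarrow> bool. {n. Q (s n)} \<in> M)"
    have isf: "is_filter G"
    proof
      show "G (\<lambda>x. True)" unfolding G_def using Mcof[of UNIV] by simp
    next
      fix P1 P2 :: "'v \<Rightarrow> bool" assume "G (\<lambda>x. P1 x)" "G (\<lambda>x. P2 x)"
      then have "{n. P1 (s n)} \<inter> {n. P2 (s n)} \<in> M" unfolding G_def by (intro Mint)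
      then show "G (\<lambda>x. P1 x \<and> P2 x)" unfolding G_def by (simp add: Collect_conj_eq)
    next
      fix P1 P2 :: "'v \<Rightarrow> bool" assume "\<forall>x. P1 x \<longrightarrow> P2 x" "G (\<lambda>x. P1 x)"
      then show "G (\<lambda>x. P2 x)" unfolding G_def by (auto elim!: Mup)
    qed
    define F where "F = Abs_filter G"
    have evF: "eventually Q F \<longleftrightarrow> {n. Q (s n)} \<in> M" for Q
      unfolding F_def using eventually_Abs_filter[OF isf, of Q] unfolding G_def by simp
    have "cauchy_filter_sn P F"
      unfolding cauchy_filter_sn_def
    proof (intro conjI ballI allI impI)
      show "F \<noteq> bot" unfolding eventually_False[symmetric] evF using Me by simp
      fix p and e :: real assume p: "p \<in> P" and e: "e > 0"
      define V where "V = sball {p} (e/2) 0"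
      have V: "openin T V" "0 \<in> V" unfolding V_def using openin_sball[of "{p}"] p center_sball[of "e/2" "{p}"] e by auto
      obtain H where H: "finite H" "A \<subseteq> (\<Union>f\<in>H. (\<lambda>u. f + u) ` V)"
        using A[unfolded precompact_def, rule_format, OF conjI[OF V]] by blast
      have "(\<Union>f\<in>H. {n. s n \<in> (\<lambda>u. f + u) ` V}) \<in> M"
      proof (rule Mup[OF Mcof[of UNIV]])
        show "UNIV \<subseteq> (\<Union>f\<in>H. {n. s n \<in> (\<lambda>u. f + u) ` V})" using H(2) sA by blast
      qed simp
      then obtain f where f: "f \<in> H" "{n. s n \<in> (\<lambda>u. f + u) ` V} \<in> M"
        using ultra_finite_union[OF M H(1)] by blast
      show "\<exists>A. eventually (\<lambda>x. x \<in> A) F \<and> (\<forall>x\<in>A. \<forall>y\<in>A. p (x - y) < e)"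
      proof (intro exI conjI ballI)
        show "eventually (\<lambda>x. x \<in> (\<lambda>u. f + u) ` V) F" unfolding evF using f by simp
        fix x y assume "x \<in> (\<lambda>u. f + u) ` V" "y \<in> (\<lambda>u. f + u) ` V"
        then obtain u w where uw: "u \<in> V" "w \<in> V" "x = f + u" "y = f + w" by blast
        have "p (u - w) \<le> p (u - 0) + p (0 - w)" using p p_tri by blast
        moreover have "p (0 - w) = p (w - 0)" using p p_commute by blast
        moreover have "p (u - 0) < e/2" "p (w - 0) < e/2" using uw unfolding V_def sball_def by auto
        ultimately have "p (u - w) < e" by linarith
        then show "p (x - y) < e" using uw by (simp add: algebra_simps)
      qed
    qed
    then obtain l where l: "limitin T (\<lambda>x. x) l F" using C unfolding complete_lcs_def by blast
    have "cluster_point_seq T s l"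
      unfolding cluster_point_seq_def
    proof (intro conjI allI impI)
      show "l \<in> topspace T" by simp
      fix U assume U: "openin T U \<and> l \<in> U"
      then have "{n. s n \<in> U} \<in> M" using l unfolding limitin_def evF by blast
      show "\<exists>\<^sub>F n in sequentially. s n \<in> U"
      proof (rule ccontr)
        assume "\<not> (\<exists>\<^sub>F n in sequentially. s n \<in> U)"
        then obtain N where N: "\<And>n. n \<ge> N \<Longrightarrow> s n \<notin> U"
          unfolding not_frequently eventually_sequentially by blast
        have "- {N..} = {..<N}" by auto
        then have "{N..} \<in> M" using Mcof[of "{N..}"] by simp
        then have "{n. s n \<in> U} \<inter> {N..} \<in> M" using \<open>{n. s n \<in> U} \<in> M\<close> by (intro Mint)
        moreover have "{n. s n \<in> U} \<inter> {N..} = {}" using N by auto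
        ultimately show False using Me by simp
      qed
    qed
    then show "\<exists>x. cluster_point_seq T s x" by blast
  qed
  then show ?thesis using ang unfolding angelic_def by blast
qed

end


context LCS begin

lemma p_sr: "p \<in> P \<Longrightarrow> p (smul (of_real r) x) = \<bar>r\<bar> * p x"
  using p_scale[of p "of_real r" x] by simp

lemma sr_add: "smul (of_real (r + s)) x = smul (of_real r) x + smul (of_real s) x"
  by (simp add: vs.scale_left_distrib)

lemma sr_sr: "smul (of_real r) (smul (of_real s) x) = smul (of_real (r * s)) x"
  by simp

definition goodG :: "('v \<Rightarrow> real) \<Rightarrow> 'v \<Rightarrow> ('v \<times> real) set \<Rightarrow> bool" where
  "goodG p x0 G \<longleftrightarrow> (\<forall>x a b. (x, a) \<in> G \<longrightarrow> (x, b) \<in> G \<longrightarrow> a = b) \<and> (x0, p x0) \<in> G \<and>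
     (\<forall>x a y b. (x, a) \<in> G \<longrightarrow> (y, b) \<in> G \<longrightarrow> (x + y, a + b) \<in> G) \<and>
     (\<forall>x a r. (x, a) \<in> G \<longrightarrow> (smul (of_real r) x, r * a) \<in> G) \<and> (\<forall>x a. (x, a) \<in> G \<longrightarrow> a \<le> p x)"

lemma goodG_fun: "goodG p x0 G \<Longrightarrow> (x, a) \<in> G \<Longrightarrow> (x, b) \<in> G \<Longrightarrow> a = b"
  unfolding goodG_def by blast
lemma goodG_x0: "goodG p x0 G \<Longrightarrow> (x0, p x0) \<in> G"
  unfolding goodG_def by blast
lemma goodG_add: "goodG p x0 G \<Longrightarrow> (x, a) \<in> G \<Longrightarrow> (y, b) \<in> G \<Longrightarrow> (x + y, a + b) \<in> G"
  unfolding goodG_def by blast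
lemma goodG_scale: "goodG p x0 G \<Longrightarrow> (x, a) \<in> G \<Longrightarrow> (smul (of_real r) x, r * a) \<in> G"
  unfolding goodG_def by blast
lemma goodG_dom: "goodG p x0 G \<Longrightarrow> (x, a) \<in> G \<Longrightarrow> a \<le> p x"
  unfolding goodG_def by blast
lemma goodGI:
  assumes "\<And>x a b. (x, a) \<in> G \<Longrightarrow> (x, b) \<in> G \<Longrightarrow> a = b" "(x0, p x0) \<in> G"
    "\<And>x a y b. (x, a) \<in> G \<Longrightarrow> (y, b) \<in> G \<Longrightarrow> (x + y, a + b) \<in> G"
    "\<And>x a r. (x, a) \<in> G \<Longrightarrow> (smul (of_real r) x, r * a) \<in> G" "\<And>x a. (x, a) \<in> G \<Longrightarrow> a \<le> p x"
  shows "goodG p x0 G"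
  unfolding goodG_def using assms by blast

lemma goodG_zero: assumes "goodG p x0 G" shows "(0, 0) \<in> G"
  using goodG_scale[OF assms goodG_x0[OF assms], of 0] by simp

lemma goodG_neg: "goodG p x0 G \<Longrightarrow> (x, a) \<in> G \<Longrightarrow> (- x, - a) \<in> G"
  using goodG_scale[of p x0 G x a "-1"] by simp

lemma goodG_base:
  assumes p: "p \<in> P"
  shows "goodG p x0 {(smul (of_real t) x0, t * p x0) | t. True}"
proof (rule goodGI)
  fix x a b assume "(x, a) \<in> {(smul (of_real t) x0, t * p x0) | t. True}" "(x, b) \<in> {(smul (of_real t) x0, t * p x0) | t. True}"
  then obtain t t' where tt: "x = smul (of_real t) x0" "a = t * p x0" "x = smul (of_real t') x0" "b = t' * p x0" by blast
  have "smul (of_real t) x0 = smul (of_real t') x0" by (rule trans[OF tt(1)[symmetric] tt(3)])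
  then have "t = t' \<or> x0 = 0" by auto
  then show "a = b" using tt p by auto
next
  show "(x0, p x0) \<in> {(smul (of_real t) x0, t * p x0) | t. True}" by (auto intro!: exI[of _ 1])
next
  fix x a y b assume "(x, a) \<in> {(smul (of_real t) x0, t * p x0) | t. True}" "(y, b) \<in> {(smul (of_real t) x0, t * p x0) | t. True}"
  then obtain t t' where "x = smul (of_real t) x0" "a = t * p x0" "y = smul (of_real t') x0" "b = t' * p x0" by blast
  then show "(x + y, a + b) \<in> {(smul (of_real t) x0, t * p x0) | t. True}"
    by (intro CollectI exI[of _ "t + t'"]) (simp add: sr_add algebra_simps)
next
  fix x a r assume "(x, a) \<in> {(smul (of_real t) x0, t * p x0) | t. True}"
  then obtain t where "x = smul (of_real t) x0" "a = t * p x0" by blast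
  then show "(smul (of_real r) x, r * a) \<in> {(smul (of_real t) x0, t * p x0) | t. True}"
    by (intro CollectI exI[of _ "r * t"]) simp
next
  fix x a assume "(x, a) \<in> {(smul (of_real t) x0, t * p x0) | t. True}"
  then obtain t where t: "x = smul (of_real t) x0" "a = t * p x0" by blast
  have "p x = \<bar>t\<bar> * p x0" using t p_sr[OF p] by simp
  moreover have "t * p x0 \<le> \<bar>t\<bar> * p x0" using p_nonneg[OF p, of x0] by (intro mult_right_mono) auto
  ultimately show "a \<le> p x" using t by simp
qed

lemma real_HB:
  assumes p: "p \<in> P"
  shows "\<exists>f. (\<forall>x y. f (x + y) = f x + f y) \<and> (\<forall>r x. f (smul (of_real r) x) = r * f x) \<and>
             (\<forall>x. f x \<le> p x) \<and> f x0 = p x0"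
proof -
  have "\<exists>M\<in>{G. goodG p x0 G}. \<forall>X\<in>{G. goodG p x0 G}. M \<subseteq> X \<longrightarrow> X = M"
  proof (rule subset_Zorn)
    fix C assume C: "subset.chain {G. goodG p x0 G} C"
    show "\<exists>U\<in>{G. goodG p x0 G}. \<forall>X\<in>C. X \<subseteq> U"
    proof (cases "C = {}")
      case True then show ?thesis using goodG_base[OF p] by blast
    next
      case False
      have CC: "\<And>X. X \<in> C \<Longrightarrow> goodG p x0 X" and tot: "\<And>X Y. X \<in> C \<Longrightarrow> Y \<in> C \<Longrightarrow> X \<subseteq> Y \<or> Y \<subseteq> X"
        using C unfolding subset.chain_def by auto
      have two: "\<exists>G\<in>C. u \<in> G \<and> v \<in> G" if uv: "u \<in> \<Union>C" "v \<in> \<Union>C" for u v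
      proof -
        obtain G1 G2 where G: "G1 \<in> C" "G2 \<in> C" "u \<in> G1" "v \<in> G2" using uv by blast
        show ?thesis
        proof (cases "G1 \<subseteq> G2")
          case True then show ?thesis using G by blast
        next
          case False then have "G2 \<subseteq> G1" using tot G by blast
          then show ?thesis using G by blast
        qed
      qed
      have "goodG p x0 (\<Union>C)"
      proof (rule goodGI)
        fix x a b assume "(x, a) \<in> \<Union>C" "(x, b) \<in> \<Union>C"
        then obtain G where "G \<in> C" "(x, a) \<in> G" "(x, b) \<in> G" using two by blast
        then show "a = b" using goodG_fun[OF CC] by blast
      next
        obtain G where "G \<in> C" using False by blast
        then show "(x0, p x0) \<in> \<Union>C" using goodG_x0[OF CC] by blast
      next
        fix x a y b assume "(x, a) \<in> \<Union>C" "(y, b) \<in> \<Union>C"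
        then obtain G where "G \<in> C" "(x, a) \<in> G" "(y, b) \<in> G" using two by blast
        then show "(x + y, a + b) \<in> \<Union>C" using goodG_add[OF CC] by blast
      next
        fix x a r assume "(x, a) \<in> \<Union>C"
        then obtain G where "G \<in> C" "(x, a) \<in> G" by blast
        then show "(smul (of_real r) x, r * a) \<in> \<Union>C" using goodG_scale[OF CC] by blast
      next
        fix x a assume "(x, a) \<in> \<Union>C"
        then obtain G where "G \<in> C" "(x, a) \<in> G" by blast
        then show "a \<le> p x" using goodG_dom[OF CC] by blast
      qed
      then show ?thesis by blast
    qed
  qed
  then obtain M where M: "goodG p x0 M" and Mmax: "\<And>X. goodG p x0 X \<Longrightarrow> M \<subseteq> X \<Longrightarrow> X = M" by blast
  have total: "\<exists>a. (y, a) \<in> M" for y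
  proof (rule ccontr)
    assume ny: "\<not> (\<exists>a. (y, a) \<in> M)"
    define S where "S = {a - p (x - y) | x a. (x, a) \<in> M}"
    have key: "a - p (x - y) \<le> p (x' + y) - a'" if "(x, a) \<in> M" "(x', a') \<in> M" for x a x' a'
    proof -
      have "a + a' \<le> p (x + x')" using goodG_dom[OF M goodG_add[OF M that]] .
      also have "p (x + x') \<le> p (x - y) + p (x' + y)" using p_add[OF p, of "x - y" "x' + y"] by simp
      finally show ?thesis by linarith
    qed
    have Sne: "S \<noteq> {}" unfolding S_def using goodG_zero[OF M] by blast
    have Sbd: "bdd_above S" unfolding S_def
      by (rule bdd_aboveI[of _ "p (0 + y) - 0"]) (use key goodG_zero[OF M] in blast)
    define c where "c = Sup S"
    have cl: "a - p (x - y) \<le> c" if "(x, a) \<in> M" for x a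
      unfolding c_def using that Sbd by (intro cSup_upper) (auto simp: S_def)
    have cu: "c \<le> p (x + y) - a" if "(x, a) \<in> M" for x a
      unfolding c_def using that Sne key by (intro cSup_least) (auto simp: S_def)
    define M' where "M' = {(x + smul (of_real t) y, a + t * c) | x a t. (x, a) \<in> M}"
    have yM: "\<forall>x a. (x, a) \<in> M \<longrightarrow> x \<noteq> y" using ny by blast
    have "goodG p x0 M'"
    proof (rule goodGI)
      fix z a b assume "(z, a) \<in> M'" "(z, b) \<in> M'"
      then obtain x1 a1 t1 x2 a2 t2 where E: "(x1, a1) \<in> M" "(x2, a2) \<in> M" "z = x1 + smul (of_real t1) y"
        "a = a1 + t1 * c" "z = x2 + smul (of_real t2) y" "b = a2 + t2 * c" unfolding M'_def by blast
      show "a = b"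
      proof (cases "t1 = t2")
        case True
        then have "x1 = x2" using E by simp
        then show ?thesis using E True goodG_fun[OF M] by blast
      next
        case False
        have "(x2 + - x1, a2 + - a1) \<in> M" using goodG_add[OF M E(2) goodG_neg[OF M E(1)]] .
        from goodG_scale[OF M this, of "1 / (t1 - t2)"]
        have in1: "(smul (of_real (1 / (t1 - t2))) (x2 + - x1), (1 / (t1 - t2)) * (a2 + - a1)) \<in> M" .
        have "smul (of_real t1) y - smul (of_real t2) y = x2 - x1" using E by (simp add: algebra_simps)
        then have eq: "smul (of_real (t1 - t2)) y = x2 - x1" by (simp add: vs.scale_left_diff_distrib)
        have "smul (of_real (1 / (t1 - t2))) (x2 + - x1) = smul (of_real (1 / (t1 - t2))) (smul (of_real (t1 - t2)) y)"
          using eq by simp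
        also have "\<dots> = smul (of_real (1 / (t1 - t2)) * of_real (t1 - t2)) y" by (rule vs.scale_scale)
        also have "of_real (1 / (t1 - t2)) * of_real (t1 - t2) = (1::'k)"
          using False by (simp add: of_real_mult[symmetric] del: of_real_mult)
        finally have "smul (of_real (1 / (t1 - t2))) (x2 + - x1) = y" by simp
        then show ?thesis using in1 yM by metis
      qed
    next
      show "(x0, p x0) \<in> M'" unfolding M'_def using goodG_x0[OF M]
        by (intro CollectI exI[of _ x0] exI[of _ "p x0"] exI[of _ 0]) simp
    next
      fix z a w b assume "(z, a) \<in> M'" "(w, b) \<in> M'"
      then obtain x1 a1 t1 x2 a2 t2 where E: "(x1, a1) \<in> M" "(x2, a2) \<in> M" "z = x1 + smul (of_real t1) y"
        "a = a1 + t1 * c" "w = x2 + smul (of_real t2) y" "b = a2 + t2 * c" unfolding M'_def by blast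
      have "(x1 + x2, a1 + a2) \<in> M" using goodG_add[OF M E(1,2)] .
      moreover have "z + w = (x1 + x2) + smul (of_real (t1 + t2)) y" using E by (simp add: sr_add algebra_simps)
      moreover have "a + b = (a1 + a2) + (t1 + t2) * c" using E by (simp add: algebra_simps)
      ultimately show "(z + w, a + b) \<in> M'" unfolding M'_def by blast
    next
      fix z a r assume "(z, a) \<in> M'"
      then obtain x1 a1 t1 where E: "(x1, a1) \<in> M" "z = x1 + smul (of_real t1) y" "a = a1 + t1 * c"
        unfolding M'_def by blast
      have "(smul (of_real r) x1, r * a1) \<in> M" using goodG_scale[OF M E(1)] .
      moreover have "smul (of_real r) z = smul (of_real r) x1 + smul (of_real (r * t1)) y"
        using E by (simp add: vs.scale_right_distrib)
      moreover have "r * a = r * a1 + (r * t1) * c" using E by (simp add: algebra_simps)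
      ultimately show "(smul (of_real r) z, r * a) \<in> M'" unfolding M'_def by blast
    next
      fix z a assume "(z, a) \<in> M'"
      then obtain x1 a1 t where E: "(x1, a1) \<in> M" "z = x1 + smul (of_real t) y" "a = a1 + t * c"
        unfolding M'_def by blast
      consider "t = 0" | "t > 0" | "t < 0" by linarith
      then show "a \<le> p z"
      proof cases
        case 1 then show ?thesis using E goodG_dom[OF M E(1)] by simp
      next
        case 2
        have "(smul (of_real (1 / t)) x1, (1 / t) * a1) \<in> M" using goodG_scale[OF M E(1)] .
        then have "c \<le> p (smul (of_real (1 / t)) x1 + y) - (1 / t) * a1" by (rule cu)
        then have "t * c \<le> t * p (smul (of_real (1 / t)) x1 + y) - a1" using 2
          by (simp add: field_simps)
        also have "t * p (smul (of_real (1 / t)) x1 + y) = p (smul (of_real t) (smul (of_real (1 / t)) x1 + y))"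
          using p_sr[OF p] 2 by simp
        also have "smul (of_real t) (smul (of_real (1 / t)) x1 + y) = x1 + smul (of_real t) y"
          using 2 by (simp add: vs.scale_right_distrib)
        finally show ?thesis using E by simp
      next
        case 3
        define s where "s = - t"
        have s: "s > 0" using 3 unfolding s_def by simp
        have "(smul (of_real (1 / s)) x1, (1 / s) * a1) \<in> M" using goodG_scale[OF M E(1)] .
        then have "(1 / s) * a1 - p (smul (of_real (1 / s)) x1 - y) \<le> c" by (rule cl)
        then have "a1 - s * p (smul (of_real (1 / s)) x1 - y) \<le> s * c" using s
          by (simp add: field_simps)
        also have "s * p (smul (of_real (1 / s)) x1 - y) = p (smul (of_real s) (smul (of_real (1 / s)) x1 - y))"
          using p_sr[OF p] s by simp
        also have "smul (of_real s) (smul (of_real (1 / s)) x1 - y) = x1 + smul (of_real t) y"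
          using s unfolding s_def by (simp add: vs.scale_right_diff_distrib)
        finally show ?thesis using E unfolding s_def by simp
      qed
    qed
    moreover have "M \<subseteq> M'" unfolding M'_def by (force intro: exI[of _ 0])
    ultimately have "M' = M" using Mmax by blast
    moreover have "(y, c) \<in> M'" unfolding M'_def using goodG_zero[OF M]
      by (intro CollectI exI[of _ 0] exI[of _ 0] exI[of _ 1]) simp
    ultimately show False using ny by blast
  qed
  define f where "f x = (THE a. (x, a) \<in> M)" for x
  have fM: "(x, f x) \<in> M" for x
  proof -
    obtain a where a: "(x, a) \<in> M" using total by blast
    have "f x = a" unfolding f_def using a goodG_fun[OF M] by blast
    then show ?thesis using a by simp
  qed
  have fv: "f x = a" if "(x, a) \<in> M" for x a using goodG_fun[OF M fM that] .
  have "f (x + y) = f x + f y" for x y using fv[OF goodG_add[OF M fM fM]] .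
  moreover have "f (smul (of_real r) x) = r * f x" for r x using fv[OF goodG_scale[OF M fM]] .
  moreover have "f x \<le> p x" for x using goodG_dom[OF M fM] .
  moreover have "f x0 = p x0" using fv[OF goodG_x0[OF M]] .
  ultimately show ?thesis by blast
qed

end


lemma vs_mult: "Vector_Spaces.vector_space ((*) :: 'k::field \<Rightarrow> 'k \<Rightarrow> 'k)"
  by unfold_locales (auto simp: algebra_simps)

lemma real_j_eq:
  fixes j :: "'a::real_normed_field"
  assumes j: "j * j = -1" and eq: "of_real a - j * of_real b = of_real c"
  shows "b = 0 \<and> a = c"
proof -
  have "j * of_real b = of_real (a - c)" using eq by (simp add: algebra_simps)
  have b: "b = 0"
  proof (rule ccontr)
    assume "b \<noteq> 0"
    then have "(of_real b :: 'a) \<noteq> 0" by simp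
    then have "j = of_real (a - c) / of_real b" using \<open>j * of_real b = of_real (a - c)\<close>
      by (metis nonzero_mult_div_cancel_right)
    then have "j = of_real ((a - c) / b)" by simp
    then show False using not_real_unit[OF j] by blast
  qed
  then show ?thesis using eq by simp
qed

context LCS begin

lemma dominated_dual:
  assumes add: "\<And>x y. \<phi> (x + y) = \<phi> x + \<phi> y" and sc: "\<And>c x. \<phi> (smul c x) = c * \<phi> x"
    and p: "p \<in> P" and dom: "\<And>x. norm (\<phi> x) \<le> p x"
  shows "\<phi> \<in> dual smul P"
proof -
  have lin: "Vector_Spaces.linear smul (*) \<phi>"
    unfolding Vector_Spaces.linear_iff using vs.vector_space_axioms vs_mult add sc by blast
  have diff: "\<phi> (x - y) = \<phi> x - \<phi> y" for x y using add[of "x - y" y] by simp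
  have "continuous_map T euclidean \<phi>"
    unfolding continuous_map_def
  proof (intro conjI allI impI)
    show "\<phi> \<in> topspace T \<rightarrow> topspace euclidean" by simp
    fix U :: "'k set" assume "openin euclidean U"
    then have U: "open U" by simp
    show "openin T {x \<in> topspace T. \<phi> x \<in> U}"
      unfolding openin_T
    proof
      fix x assume "x \<in> {x \<in> topspace T. \<phi> x \<in> U}"
      then obtain e where e: "e > 0" "ball (\<phi> x) e \<subseteq> U" using U open_contains_ball by force
      have "sball {p} e x \<subseteq> {x \<in> topspace T. \<phi> x \<in> U}"
      proof
        fix y assume "y \<in> sball {p} e x"
        then have "p (y - x) < e" by (simp add: sball_def)
        then have "norm (\<phi> y - \<phi> x) < e" using dom[of "y - x"] diff by simp
        then have "\<phi> y \<in> ball (\<phi> x) e" by (simp add: dist_norm norm_minus_commute)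
        then show "y \<in> {x \<in> topspace T. \<phi> x \<in> U}" using e by auto
      qed
      then show "\<exists>Q e. finite Q \<and> Q \<subseteq> P \<and> e > 0 \<and> sball Q e x \<subseteq> {x \<in> topspace T. \<phi> x \<in> U}"
        using p e by blast
    qed
  qed
  then show ?thesis unfolding dual_def using lin by blast
qed

lemma HBK: "\<exists>c>0. \<forall>p\<in>P. \<forall>x0. \<exists>\<phi>\<in>dual smul P. (\<forall>x. norm (\<phi> x) \<le> p x) \<and> c * p x0 \<le> norm (\<phi> x0)"
proof (cases "\<forall>c::'k. \<exists>r. c = of_real r")
  case True
  have "\<forall>p\<in>P. \<forall>x0. \<exists>\<phi>\<in>dual smul P. (\<forall>x. norm (\<phi> x) \<le> p x) \<and> 1 * p x0 \<le> norm (\<phi> x0)"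
  proof (intro ballI allI)
    fix p x0 assume p: "p \<in> P"
    obtain f where f: "\<And>x y. f (x + y) = f x + f y" "\<And>r x. f (smul (of_real r) x) = r * f x"
      "\<And>x. f x \<le> p x" "f x0 = p x0" using real_HB[OF p, of x0] by blast
    define \<phi> where "\<phi> x = (of_real (f x) :: 'k)" for x
    have add: "\<phi> (x + y) = \<phi> x + \<phi> y" for x y unfolding \<phi>_def f(1) by simp
    have sc: "\<phi> (smul c x) = c * \<phi> x" for c x
    proof -
      obtain r where "c = of_real r" using True by blast
      then show ?thesis unfolding \<phi>_def using f(2) by simp
    qed
    have dom: "norm (\<phi> x) \<le> p x" for x
    proof -
      have "- f x = f (smul (of_real (-1)) x)" using f(2)[of "-1" x] by simp
      also have "\<dots> \<le> p (smul (of_real (-1)) x)" by (rule f(3))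
      also have "\<dots> = p x" using p_sr[OF p, of "-1" x] by simp
      finally show ?thesis unfolding \<phi>_def using f(3)[of x] by simp
    qed
    have "\<phi> \<in> dual smul P" by (rule dominated_dual[OF add sc p dom])
    moreover have "1 * p x0 \<le> norm (\<phi> x0)" unfolding \<phi>_def f(4) using p_nonneg[OF p] by simp
    ultimately show "\<exists>\<phi>\<in>dual smul P. (\<forall>x. norm (\<phi> x) \<le> p x) \<and> 1 * p x0 \<le> norm (\<phi> x0)" using dom by blast
  qed
  then show ?thesis by (intro exI[of _ 1]) simp
next
  case False
  then obtain j :: 'k where j: "j * j = -1" and jf: "\<And>c. \<exists>r s. c = of_real r + of_real s * j"
    using classify by blast
  obtain C where C: "C > 0" "\<And>r s. C * \<bar>r\<bar> \<le> norm (of_real r + of_real s * j :: 'k)"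
    using unit_lower[OF j] by blast
  have "\<forall>p\<in>P. \<forall>x0. \<exists>\<phi>\<in>dual smul P. (\<forall>x. norm (\<phi> x) \<le> p x) \<and> C * p x0 \<le> norm (\<phi> x0)"
  proof (intro ballI allI)
    fix p x0 assume p: "p \<in> P"
    obtain f where f: "\<And>x y. f (x + y) = f x + f y" "\<And>r x. f (smul (of_real r) x) = r * f x"
      "\<And>x. f x \<le> p x" "f x0 = p x0" using real_HB[OF p, of x0] by blast
    have fneg: "f (- x) = - f x" for x using f(2)[of "-1" x] by simp
    define \<phi> where "\<phi> x = (of_real (f x) - j * of_real (f (smul j x)) :: 'k)" for x
    have add: "\<phi> (x + y) = \<phi> x + \<phi> y" for x y unfolding \<phi>_def by (simp add: f(1) vs.scale_right_distrib algebra_simps)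
    have scr: "\<phi> (smul (of_real r) x) = of_real r * \<phi> x" for r x
    proof -
      have "smul j (smul (of_real r) x) = smul (of_real r) (smul j x)" by (simp add: mult.commute)
      then have e1: "f (smul j (smul (of_real r) x)) = r * f (smul j x)" using f(2)[of r "smul j x"] by metis
      show ?thesis unfolding \<phi>_def e1 f(2) by (simp add: algebra_simps)
    qed
    have scj: "\<phi> (smul j x) = j * \<phi> x" for x
    proof -
      have "smul j (smul j x) = - x" using j by simp
      then have "\<phi> (smul j x) = of_real (f (smul j x)) + j * of_real (f x)" unfolding \<phi>_def by (simp add: fneg)
      also have "\<dots> = j * \<phi> x" unfolding \<phi>_def by (simp add: algebra_simps j mult.assoc[symmetric])
      finally show ?thesis .
    qed
    have sc: "\<phi> (smul c x) = c * \<phi> x" for c x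
    proof -
      obtain r s where c: "c = of_real r + of_real s * j" using jf by blast
      have eqsc: "smul c x = smul (of_real r) x + smul (of_real s) (smul j x)" unfolding c by (simp add: vs.scale_left_distrib)
      have "\<phi> (smul c x) = \<phi> (smul (of_real r) x) + \<phi> (smul (of_real s) (smul j x))" unfolding eqsc by (rule add)
      also have "\<dots> = of_real r * \<phi> x + of_real s * \<phi> (smul j x)" by (simp only: scr)
      also have "\<dots> = of_real r * \<phi> x + of_real s * (j * \<phi> x)" by (simp only: scj)
      finally show ?thesis unfolding c by (simp add: algebra_simps)
    qed
    have dom: "norm (\<phi> x) \<le> p x" for x
    proof (cases "\<phi> x = 0")
      case True then show ?thesis using p_nonneg[OF p] by simp
    next
      case False
      define w where "w = of_real (norm (\<phi> x)) / \<phi> x"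
      have nw: "norm w = 1" unfolding w_def using False by (simp add: norm_divide)
      have "\<phi> (smul w x) = of_real (norm (\<phi> x))" unfolding sc w_def using False by simp
      then have "of_real (f (smul w x)) - j * of_real (f (smul j (smul w x))) = of_real (norm (\<phi> x))"
        unfolding \<phi>_def .
      then have "f (smul w x) = norm (\<phi> x)" using real_j_eq[OF j] by blast
      then have "norm (\<phi> x) \<le> p (smul w x)" using f(3) by metis
      also have "\<dots> = p x" using p_scale[OF p] nw by simp
      finally show ?thesis .
    qed
    have "\<phi> \<in> dual smul P" by (rule dominated_dual[OF add sc p dom])
    moreover have "C * p x0 \<le> norm (\<phi> x0)"
    proof -
      have "\<phi> x0 = of_real (p x0) + of_real (- f (smul j x0)) * j" unfolding \<phi>_def f(4) by (simp add: algebra_simps)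
      then have "C * \<bar>p x0\<bar> \<le> norm (\<phi> x0)" using C(2) by metis
      then show ?thesis using p_nonneg[OF p, of x0] by simp
    qed
    ultimately show "\<exists>\<phi>\<in>dual smul P. (\<forall>x. norm (\<phi> x) \<le> p x) \<and> C * p x0 \<le> norm (\<phi> x0)" using dom by blast
  qed
  then show ?thesis using C(1) by blast
qed

end


theorem propositionp:
  fixes smul :: "'k::{real_normed_field, banach} \<Rightarrow> 'v::ab_group_add \<Rightarrow> 'v"
    and P :: "('v \<Rightarrow> real) set"
    and p q :: ereal
  assumes "lcs smul P"
    and "1 \<le> p" and "p \<le> q"
    and "angelic (seminorm_top P)"
    and "complete_lcs P"
    and "barrelled smul P"
  shows "(GP smul P p q \<longleftrightarrow> EGP smul P p q) \<and>
         (GP smul P p q \<longleftrightarrow> sGP smul P p q) \<and>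
         (GP smul P p q \<longleftrightarrow> sEGP smul P p q) \<and>
         (GP smul P p q \<longleftrightarrow> prGP smul P p q) \<and>
         (GP smul P p q \<longleftrightarrow> prEGP smul P p q) \<and>
         (GP smul P p q \<longleftrightarrow> spGP smul P p q) \<and>
         (GP smul P p q \<longleftrightarrow> spEGP smul P p q) \<and>
         (GP smul P p q \<longleftrightarrow> bGP smul P p q)"
proof -
  interpret L: LCS smul P by unfold_locales (rule assms(1))
  have HB: "\<exists>c>0. \<forall>p\<in>P. \<forall>x0. \<exists>\<phi>\<in>dual smul P. (\<forall>x. norm (\<phi> x) \<le> p x) \<and> c * p x0 \<le> norm (\<phi> x0)"
    by (rule L.HBK)
  have lim: "pq_E_limited smul P p q A \<longleftrightarrow> pq_limited smul P p q A" for A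
    by (rule L.limited_eq[OF assms(6,2)])
  have e1: "rel_compact (seminorm_top P) A \<longleftrightarrow> precompact (seminorm_top P) A" for A
    using L.relcompact_precompact L.precompact_relcompact[OF assms(4,5)] by blast
  have e2: "rel_compact (seminorm_top P) A \<longleftrightarrow> rel_seq_compact (seminorm_top P) A" for A
    using L.relcompact_relseqcompact[OF assms(4)] L.relseqcompact_relcompact[OF assms(4)] by blast
  have e3: "rel_seq_compact (seminorm_top P) A \<longleftrightarrow> seq_precompact P A" for A
    using L.relseqcompact_seqprecompact L.seqprecompact_relseqcompact[OF assms(5)] by blast
  have e4: "precompact (seminorm_top P) A \<longleftrightarrow> precompact (strong_top smul P) A" for A
    using L.precompact_strong[OF assms(6)] L.strong_precompact[OF HB] by blast
  show ?thesis
    unfolding GP_def EGP_def sGP_def sEGP_def prGP_def prEGP_def spGP_def spEGP_def bGP_def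
    using lim e1 e2 e3 e4 by metis
qed


end
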